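(* Let $d\ge 3$ and let $A=\lambda B+(1-\lambda)B'$ with $0<\lambda<1$, where $B,B'$ are $d$-dimensional $(0,1)$-matrices of order $4$ each equivalent to $\mathcal{M}_4^d$. Suppose the tessellation index of $A$ is $d-1$, and suppose that no new entry is added to the support of any filled subcube, i.e. $\operatorname{supp}(B')\cap C\subseteq\operatorname{supp}(B)$ for every filled subcube $C$ of $B$ and $\operatorname{supp}(B)\cap C'\subseteq\operatorname{supp}(B')$ for every filled subcube $C'$ of $B'$. Then $A$ is equivalent to a matrix from $\mathcal{L}_4^d$.
   Context: $\mathcal{M}_n^d$ has entry $1$ at $\alpha$ iff $\alpha_1+\dots+\alpha_d\equiv0\pmod n$. $\mathcal{L}_n^d$ is the family of matrices $\mu\mathcal{M}_n^d+(1-\mu)M$, $0<\mu<1$, where $M$ is the $(0,1)$-matrix with support $\{\alpha:\alpha_1+\dots+\alpha_{d-1}+\pi(\alpha_d)\equiv0\pmod n\}$, $\pi$ the transposition of $0$ and $1$. Equivalence: permuting coordinate positions and/or applying a permutation of $\{0,\dots,n-1\}$ to a single coordinate, repeatedly. The support $\operatorname{supp}$ is the set of indices of nonzero entries. Define $p_1,p_2,p_3:\{0,1,2,3\}\to\{0,1\}$ by $p_1(0)=p_1(1)=0,\ p_1(2)=p_1(3)=1$; $p_2(0)=p_2(2)=0,\ p_2(1)=p_2(3)=1$; $p_3(0)=p_3(3)=0,\ p_3(1)=p_3(2)=1$; and $\mu_1(0)=\mu_1(2)=0,\ \mu_1(1)=\mu_1(3)=1$; $\mu_2(0)=\mu_2(1)=0,\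 \mu_2(2)=\mu_2(3)=1$; $\mu_3(0)=\mu_3(2)=0,\ \mu_3(1)=\mu_3(3)=1$. $Q_s^d=\{y\in\{0,1\}^d:w(y)\equiv s\pmod 2\}$ ($w$ = Hamming weight). For $\mathcal{E}\in\{1,2,3\}^d$, $s\in\{0,1\}$, $\lambda:Q_s^d\to\{0,1\}$, the block permutation with parameters $(\mathcal{E},\lambda,s)$ is the $(0,1)$-matrix with entry $1$ at $\alpha$ iff $\bigoplus_i p_{\varepsilon_i}(\alpha_i)=s$ and $\bigoplus_i\mu_{\varepsilon_i}(\alpha_i)\oplus\lambda(p_{\varepsilon_1}(\alpha_1),\dots,p_{\varepsilon_d}(\alpha_d))=0$. Every matrix equivalent to $\mathcal{M}_4^d$ ($d\ge3$) is a block permutation for a unique parameter triple; relative to these, its subcubes are $C_y=\{\alpha:p_{\varepsilon_i}(\alpha_i)=y_i\ \forall i\}$ and $C_y$ is filled if $w(y)\equiv s\pmod 2$. The intersection of a subcube of $B$ with a subcube of $B'$ is either empty or a product set of size $2^j$; the tessellation index of $\lambda B+(1-\lambda)B'$ is the maximum of such $j$ over pairs (filled subcube of $B$, filled subcube of $B'$) with nonempty intersection, and $-\infty$ if all are empty. *)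

theory Defs
  imports "HOL-Library.Extended_Real" "HOL-Combinatorics.Permutations"
begin

text \<open>Matrices are real-valued functions on indices; only values on idx matter.\<close>

definition idx :: "nat \<Rightarrow> nat \<Rightarrow> (nat \<Rightarrow> nat) set" where
  "idx d n = {\<alpha>. (\<forall>i<d. \<alpha> i < n) \<and> (\<forall>i\<ge>d. \<alpha> i = 0)}"

type_synonym matrix = "(nat \<Rightarrow> nat) \<Rightarrow> real"

definition supp :: "nat \<Rightarrow> nat \<Rightarrow> matrix \<Rightarrow> (nat \<Rightarrow> nat) set" where
  "supp d n A = {\<alpha> \<in> idx d n. A \<alpha> \<noteq> 0}"

definition Mmat :: "nat \<Rightarrow> nat \<Rightarrow> matrix" where
  "Mmat n d \<alpha> = (if (\<Sum>i<d. \<alpha> i) mod n = 0 then 1 else 0)"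

definition pi01 :: "nat \<Rightarrow> nat" where
  "pi01 a = (if a = 0 then 1 else if a = 1 then 0 else a)"

definition Mpi :: "nat \<Rightarrow> nat \<Rightarrow> matrix" where
  "Mpi n d \<alpha> = (if ((\<Sum>i<d - 1. \<alpha> i) + pi01 (\<alpha> (d - 1))) mod n = 0 then 1 else 0)"

definition Lmat :: "nat \<Rightarrow> nat \<Rightarrow> real \<Rightarrow> matrix" where
  "Lmat n d \<mu> \<alpha> = \<mu> * Mmat n d \<alpha> + (1 - \<mu>) * Mpi n d \<alpha>"

definition in_L :: "nat \<Rightarrow> nat \<Rightarrow> matrix \<Rightarrow> bool" where
  "in_L n d A \<longleftrightarrow> (\<exists>\<mu>. 0 < \<mu> \<and> \<mu> < 1 \<and> A = Lmat n d \<mu>)"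

definition equiv_step :: "nat \<Rightarrow> nat \<Rightarrow> matrix \<Rightarrow> matrix \<Rightarrow> bool" where
  "equiv_step d n A A' \<longleftrightarrow>
     (\<exists>\<tau>. \<tau> permutes {..<d} \<and> (\<forall>\<alpha>\<in>idx d n. A' \<alpha> = A (\<alpha> \<circ> \<tau>))) \<or>
     (\<exists>i<d. \<exists>\<pi>. \<pi> permutes {..<n} \<and> (\<forall>\<alpha>\<in>idx d n. A' \<alpha> = A (\<alpha>(i := \<pi> (\<alpha> i)))))"

definition equivalent :: "nat \<Rightarrow> nat \<Rightarrow> matrix \<Rightarrow> matrix \<Rightarrow> bool" where
  "equivalent d n = (equiv_step d n)\<^sup>*\<^sup>*"

definition pf :: "nat \<Rightarrow> nat \<Rightarrow> nat" where
  "pf e a = (if e = 1 then (if a = 0 \<or> a = 1 then 0 else 1)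
             else if e = 2 then (if a = 0 \<or> a = 2 then 0 else 1)
             else (if a = 0 \<or> a = 3 then 0 else 1))"

definition muf :: "nat \<Rightarrow> nat \<Rightarrow> nat" where
  "muf e a = (if e = 1 then (if a = 0 \<or> a = 2 then 0 else 1)
              else if e = 2 then (if a = 0 \<or> a = 1 then 0 else 1)
              else (if a = 0 \<or> a = 2 then 0 else 1))"

definition cube :: "nat \<Rightarrow> (nat \<Rightarrow> nat) set" where
  "cube d = {y. (\<forall>i<d. y i < 2) \<and> (\<forall>i\<ge>d. y i = 0)}"

definition weight :: "nat \<Rightarrow> (nat \<Rightarrow> nat) \<Rightarrow> nat" where
  "weight d y = (\<Sum>i<d. y i)"

definition Qs :: "nat \<Rightarrow> nat \<Rightarrow> (nat \<Rightarrow> nat) set" where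
  "Qs d s = {y \<in> cube d. weight d y mod 2 = s mod 2}"

definition pvec :: "nat \<Rightarrow> (nat \<Rightarrow> nat) \<Rightarrow> (nat \<Rightarrow> nat) \<Rightarrow> (nat \<Rightarrow> nat)" where
  "pvec d E \<alpha> = (\<lambda>i. if i < d then pf (E i) (\<alpha> i) else 0)"

definition bp_params :: "nat \<Rightarrow> (nat \<Rightarrow> nat) \<Rightarrow> ((nat \<Rightarrow> nat) \<Rightarrow> nat) \<Rightarrow> nat \<Rightarrow> bool" where
  "bp_params d E lb s \<longleftrightarrow> (\<forall>i<d. E i \<in> {1,2,3}) \<and> s \<in> {0,1} \<and> (\<forall>y\<in>Qs d s. lb y \<in> {0,1})"

text \<open>Block permutation with parameters (E, lambda, s) (XOR = sum mod 2).\<close>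
definition blockperm :: "nat \<Rightarrow> (nat \<Rightarrow> nat) \<Rightarrow> ((nat \<Rightarrow> nat) \<Rightarrow> nat) \<Rightarrow> nat \<Rightarrow> matrix" where
  "blockperm d E lb s \<alpha> =
     (if (\<Sum>i<d. pf (E i) (\<alpha> i)) mod 2 = s
         \<and> ((\<Sum>i<d. muf (E i) (\<alpha> i)) + lb (pvec d E \<alpha>)) mod 2 = 0 then 1 else 0)"

definition subcube :: "nat \<Rightarrow> (nat \<Rightarrow> nat) \<Rightarrow> (nat \<Rightarrow> nat) \<Rightarrow> (nat \<Rightarrow> nat) set" where
  "subcube d E y = {\<alpha> \<in> idx d 4. \<forall>i<d. pf (E i) (\<alpha> i) = y i}"

definition filled_subcubes :: "nat \<Rightarrow> (nat \<Rightarrow> nat) \<Rightarrow> nat \<Rightarrow> (nat \<Rightarrow> nat) set set" where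
  "filled_subcubes d E s = subcube d E ` Qs d s"

text \<open>Tessellation index of lambda B + (1-lambda) B' (B with parameters (E,_,s),
  B' with (E',_,s')): the maximum j such that some filled subcube of B meets some
  filled subcube of B' in exactly 2^j entries; -infinity if all intersections are empty.\<close>
definition tess_index :: "nat \<Rightarrow> (nat \<Rightarrow> nat) \<Rightarrow> nat \<Rightarrow> (nat \<Rightarrow> nat) \<Rightarrow> nat \<Rightarrow> ereal" where
  "tess_index d E s E' s' =
     Sup ((\<lambda>j. ereal (real j)) `
        {j. \<exists>C\<in>filled_subcubes d E s. \<exists>C'\<in>filled_subcubes d E' s'.
               C \<inter> C' \<noteq> {} \<and> card (C \<inter> C') = 2 ^ j})"

end

theory Submission
  imports Defs "HOL-Library.Numeral_Type" "HOL-Library.FuncSet"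
begin


lemma all4: "(\<forall>a<(4::nat). P a) \<longleftrightarrow> P 0 \<and> P 1 \<and> P 2 \<and> P 3"
  by (auto simp: less_Suc_eq numeral_eq_Suc)

lemma ex4: "(\<exists>a<(4::nat). P a) \<longleftrightarrow> P 0 \<or> P 1 \<or> P 2 \<or> P 3"
  by (auto simp: less_Suc_eq numeral_eq_Suc)

lemma lt4: "(a::nat) < 4 \<Longrightarrow> a = 0 \<or> a = 1 \<or> a = 2 \<or> a = 3" by auto

lemma presb_test:
  fixes S :: nat and f :: "nat \<Rightarrow> nat"
  assumes "(f 3 + S) mod 4 = 0" "(f 3 + S + 2) mod 2 = 0"
  shows "(f 3 + S) mod 2 = 0"
  using assms by presburger

definition pfp :: "nat \<Rightarrow> nat \<Rightarrow> nat" where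
  "pfp e a = (if e = 1 then (if a = 0 then 1 else if a = 1 then 0 else if a = 2 then 3 else 2)
     else if e = 2 then (if a = 0 then 2 else if a = 2 then 0 else if a = 1 then 3 else 1)
     else (if a = 0 then 3 else if a = 3 then 0 else if a = 1 then 2 else 1))"

lemma pfp_facts:
  assumes "e \<in> {1,2,3}" "a < 4"
  shows "pfp e a < 4" "pfp e a \<noteq> a" "pfp e (pfp e a) = a" "pf e (pfp e a) = pf e a"
    "muf e (pfp e a) + muf e a = 1"
  using assms lt4[OF assms(2)] by (auto simp: pfp_def pf_def muf_def)

lemma pf_eq_iff:
  assumes "e \<in> {1,2,3}" "a < 4" "b < 4"
  shows "pf e a = pf e b \<longleftrightarrow> (b = a \<or> b = pfp e a)"
  using assms lt4[OF assms(2)] lt4[OF assms(3)] by (auto simp: pfp_def pf_def)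

lemma pf_le1: "pf e a \<le> 1" by (auto simp: pf_def)

lemma pf_mismatch:
  assumes "e \<in> {1,2,3}" "e' \<in> {1,2,3}" "e \<noteq> e'"
  shows "\<exists>a<4. \<exists>b<4. (pf e a = pf e b) \<noteq> (pf e' a = pf e' b)"
  using assms unfolding ex4 by (auto simp: pf_def)

lemma set_lt4: "{a::nat. a < 4 \<and> P a} = set (filter P [0,1,2,3])"
  by (rule set_eqI) (auto dest!: lt4)

lemma cardT:
  assumes "e \<in> {1,2,3}" "e' \<in> {1,2,3}" "y < 2" "y' < 2"
    "{a. a < 4 \<and> pf e a = y \<and> pf e' a = y'} \<noteq> {}"
  shows "card {a. a < 4 \<and> pf e a = y \<and> pf e' a = y'} = (if e = e' then 2 else 1)"
  using assms unfolding set_lt4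
  by (auto simp: pf_def less_Suc_eq numeral_eq_Suc)

lemma aff_vals:
  fixes v0 v1 v2 v3 :: nat
  assumes "v0 < 4" "v1 < 4" "v2 < 4" "v3 < 4" "v0 \<noteq> v2" "v1 \<noteq> v3"
    "v0 mod 2 = v2 mod 2" "v1 mod 2 = v3 mod 2" "v0 mod 2 \<noteq> v1 mod 2"
  shows "\<exists>e t. (e = 1 \<or> e = (3::nat)) \<and> v0 = (e * 0 + t) mod 4 \<and> v1 = (e * 1 + t) mod 4
     \<and> v2 = (e * 2 + t) mod 4 \<and> v3 = (e * 3 + t) mod 4"
  apply (rule exI[of _ "if v1 = (v0+1) mod 4 then 1 else 3"], rule exI[of _ v0])
  using assms lt4[OF assms(1)] lt4[OF assms(2)] lt4[OF assms(3)] lt4[OF assms(4)]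
  apply -
  apply (elim disjE)
  apply simp_all
  done

lemma aff4:
  fixes p :: "nat \<Rightarrow> nat"
  assumes lt: "\<forall>a<4. p a < 4" and inj: "\<forall>a<4. \<forall>b<4. p a = p b \<longrightarrow> a = b"
    and par: "\<forall>a<4. \<forall>b<4. (p a mod 2 = p b mod 2) = (a mod 2 = b mod 2)"
  shows "\<exists>e t. (e = 1 \<or> e = (3::nat)) \<and> (\<forall>a<4. p a = (e * a + t) mod 4)"
proof -
  have h: "p 0 < 4" "p 1 < 4" "p 2 < 4" "p 3 < 4" "p 0 \<noteq> p 2" "p 1 \<noteq> p 3"
    "p 0 mod 2 = p 2 mod 2" "p 1 mod 2 = p 3 mod 2" "p 0 mod 2 \<noteq> p 1 mod 2"
    using lt inj[rule_format, of 0 2] inj[rule_format, of 1 3] par[rule_format, of 0 2]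
      par[rule_format, of 1 3] par[rule_format, of 0 1] unfolding all4 by auto
  from aff_vals[OF h] show ?thesis unfolding all4 by blast
qed

lemma chi_vals:
  fixes v0 v1 v2 v3 :: nat
  assumes "v0 < 4" "v1 < 4" "v2 < 4" "v3 < 4"
    "v0 \<noteq> v1" "v0 \<noteq> v2" "v0 \<noteq> v3" "v1 \<noteq> v2" "v1 \<noteq> v3" "v2 \<noteq> v3"
    "v0 \<noteq> 2" "v1 \<noteq> 3" "v2 \<noteq> 0" "v3 \<noteq> 1"
    "\<not> (v0 mod 2 = v2 mod 2 \<and> v1 mod 2 = v3 mod 2)"
  shows "(v0 = 1 \<and> v1 = 0 \<and> v2 = 2 \<and> v3 = 3) \<or> (v0 = 0 \<and> v1 = 2 \<and> v2 = 1 \<and> v3 = 3)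
    \<or> (v0 = 0 \<and> v1 = 1 \<and> v2 = 3 \<and> v3 = 2) \<or> (v0 = 3 \<and> v1 = 1 \<and> v2 = 2 \<and> v3 = 0)"
  using assms lt4[OF assms(1)] lt4[OF assms(2)] lt4[OF assms(3)] lt4[OF assms(4)]
  apply -
  apply (elim disjE)
  apply simp_all
  done

lemma chi_case:
  fixes c :: "nat \<Rightarrow> nat"
  shows "c 0 = 1 \<Longrightarrow> c 1 = 0 \<Longrightarrow> c 2 = 2 \<Longrightarrow> c 3 = 3 \<Longrightarrow> \<forall>x<4. c ((x + 0) mod 4) = (pi01 x + 0) mod 4"
    and "c 0 = 0 \<Longrightarrow> c 1 = 2 \<Longrightarrow> c 2 = 1 \<Longrightarrow> c 3 = 3 \<Longrightarrow> \<forall>x<4. c ((x + 1) mod 4) = (pi01 x + 1) mod 4"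
    and "c 0 = 0 \<Longrightarrow> c 1 = 1 \<Longrightarrow> c 2 = 3 \<Longrightarrow> c 3 = 2 \<Longrightarrow> \<forall>x<4. c ((x + 2) mod 4) = (pi01 x + 2) mod 4"
    and "c 0 = 3 \<Longrightarrow> c 1 = 1 \<Longrightarrow> c 2 = 2 \<Longrightarrow> c 3 = 0 \<Longrightarrow> \<forall>x<4. c ((x + 3) mod 4) = (pi01 x + 3) mod 4"
  subgoal premises p unfolding all4 by (simp add: pi01_def p p[unfolded One_nat_def numeral_2_eq_2])
  subgoal premises p unfolding all4 by (simp add: pi01_def p p[unfolded One_nat_def numeral_2_eq_2])
  subgoal premises p unfolding all4 by (simp add: pi01_def p p[unfolded One_nat_def numeral_2_eq_2])
  subgoal premises p unfolding all4 by (simp add: pi01_def p p[unfolded One_nat_def numeral_2_eq_2])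
  done

lemma par_vals:
  fixes v0 v1 v2 v3 :: nat
  assumes "v0 < 4" "v1 < 4" "v2 < 4" "v3 < 4"
    "v0 \<noteq> v1" "v0 \<noteq> v2" "v0 \<noteq> v3" "v1 \<noteq> v2" "v1 \<noteq> v3" "v2 \<noteq> v3"
    "v0 mod 2 = v2 mod 2" "v1 mod 2 = v3 mod 2"
  shows "v0 mod 2 \<noteq> v1 mod 2"
  using assms lt4[OF assms(1)] lt4[OF assms(2)] lt4[OF assms(3)] lt4[OF assms(4)]
  apply -
  apply (elim disjE)
  apply simp_all
  done

lemma chi4:
  fixes c :: "nat \<Rightarrow> nat"
  assumes lt: "\<forall>a<4. c a < 4" and inj: "\<forall>a<4. \<forall>b<4. c a = c b \<longrightarrow> a = b"
    and no2: "\<forall>a<4. c a \<noteq> (a + 2) mod 4"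
    and mis: "\<not> (\<forall>a<4. \<forall>b<4. (c a mod 2 = c b mod 2) = (a mod 2 = b mod 2))"
  shows "\<exists>t<4. \<forall>x<4. c ((x + t) mod 4) = (pi01 x + t) mod 4"
proof -
  have h: "c 0 < 4" "c 1 < 4" "c 2 < 4" "c 3 < 4" using lt unfolding all4 by auto
  have d: "c 0 \<noteq> c 1" "c 0 \<noteq> c 2" "c 0 \<noteq> c 3" "c 1 \<noteq> c 2" "c 1 \<noteq> c 3" "c 2 \<noteq> c 3"
    using inj unfolding all4 by auto
  have n: "c 0 \<noteq> 2" "c 1 \<noteq> 3" "c 2 \<noteq> 0" "c 3 \<noteq> 1" using no2 unfolding all4 by auto
  have m: "\<not> (c 0 mod 2 = c 2 mod 2 \<and> c 1 mod 2 = c 3 mod 2)"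
  proof
    assume a: "c 0 mod 2 = c 2 mod 2 \<and> c 1 mod 2 = c 3 mod 2"
    have "c 0 mod 2 \<noteq> c 1 mod 2" using a h d par_vals by blast
    then have "\<forall>a<4. \<forall>b<4. (c a mod 2 = c b mod 2) = (a mod 2 = b mod 2)"
      using a unfolding all4 by auto
    then show False using mis by blast
  qed
  from chi_vals[OF h d n m] show ?thesis
  proof (elim disjE conjE)
    assume "c 0 = 1" "c 1 = 0" "c 2 = 2" "c 3 = 3"
    then have "\<forall>x<4. c ((x + 0) mod 4) = (pi01 x + 0) mod 4" by (rule chi_case(1))
    then show ?thesis by (intro exI[of _ 0] conjI) simp_all
  next
    assume "c 0 = 0" "c 1 = 2" "c 2 = 1" "c 3 = 3"
    then have "\<forall>x<4. c ((x + 1) mod 4) = (pi01 x + 1) mod 4" by (rule chi_case(2))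
    then show ?thesis by (intro exI[of _ 1] conjI) simp_all
  next
    assume "c 0 = 0" "c 1 = 1" "c 2 = 3" "c 3 = 2"
    then have "\<forall>x<4. c ((x + 2) mod 4) = (pi01 x + 2) mod 4" by (rule chi_case(3))
    then show ?thesis by (intro exI[of _ 2] conjI) simp_all
  next
    assume "c 0 = 3" "c 1 = 1" "c 2 = 2" "c 3 = 0"
    then have "\<forall>x<4. c ((x + 3) mod 4) = (pi01 x + 3) mod 4" by (rule chi_case(4))
    then show ?thesis by (intro exI[of _ 3] conjI) simp_all
  qed
qed



abbreviation z :: "nat \<Rightarrow> 4" where "z n \<equiv> of_nat n"

lemma z4_cases: "(x::4) = 0 \<or> x = 1 \<or> x = 2 \<or> x = 3"
proof (induct x rule: bit0_induct)
  case (of_int i)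
  then have "i = 0 \<or> i = 1 \<or> i = 2 \<or> i = 3" by auto
  then show ?case by auto
qed

lemma z4_all: "(\<forall>x::4. P x) \<longleftrightarrow> P 0 \<and> P 1 \<and> P 2 \<and> P 3"
  using z4_cases by metis

lemma four0: "(4::4) = 0" by simp

lemma z_mod: "z n = z (n mod 4)"
proof -
  have "n = 4 * (n div 4) + n mod 4" by simp
  then have "z n = z (4 * (n div 4) + n mod 4)" by (rule arg_cong)
  also have "\<dots> = 4 * z (n div 4) + z (n mod 4)" by (simp only: of_nat_add of_nat_mult of_nat_numeral)
  finally show ?thesis by (simp add: four0)
qed

lemma z_lt_inj: "a < 4 \<Longrightarrow> b < 4 \<Longrightarrow> z a = z b \<Longrightarrow> a = b"
  by (drule lt4, drule lt4, elim disjE; simp)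

lemma z_eq_iff: "z a = z b \<longleftrightarrow> a mod 4 = b mod 4"
  using z_mod[of a] z_mod[of b] z_lt_inj[of "a mod 4" "b mod 4"] by auto

lemma z_eq0_iff: "z a = 0 \<longleftrightarrow> a mod 4 = 0"
  using z_eq_iff[of a 0] by simp

lemma twice_cases: "2 * (w::4) = 0 \<or> 2 * w = 2"
  using z4_cases[of w] by auto

lemma twice_zero: "2 * (w::4) = 0 \<longleftrightarrow> w = 0 \<or> w = 2"
  using z4_cases[of w] by auto

lemma four_zero: "4 * (w::4) = 0" by (simp add: four0)

lemma neg_two: "- (2::4) = 2" by simp

lemma z_par: "a mod 2 = b mod 2 \<longleftrightarrow> 2 * z a = 2 * z b"
proof -
  have "2 * z a = z (2 * a)" "2 * z b = z (2 * b)" by simp_all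
  moreover have "(2 * a) mod 4 = 2 * (a mod 2)" "(2 * b) mod 4 = 2 * (b mod 2)"
    using mod_mult_mult1[of 2 a 2] mod_mult_mult1[of 2 b 2] by simp_all
  ultimately show ?thesis using z_eq_iff[of "2*a" "2*b"] by simp
qed

lemma z_even: "a mod 2 = 0 \<longleftrightarrow> 2 * z a = 0"
  using z_par[of a 0] by simp

definition toN :: "4 \<Rightarrow> nat" where "toN w = (THE n. n < 4 \<and> z n = w)"

lemma toN_ex: "\<exists>n<4. z n = w"
  using z4_cases[of w] apply (elim disjE)
  apply (rule exI[of _ 0]; simp)
  apply (rule exI[of _ 1]; simp)
  apply (rule exI[of _ 2]; simp)
  apply (rule exI[of _ 3]; simp)
  done

lemma toN: "toN w < 4" "z (toN w) = w"
proof -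
  obtain n where n: "n < 4" "z n = w" using toN_ex by blast
  have "toN w = n" unfolding toN_def using n z_lt_inj by (intro the_equality) auto
  then show "toN w < 4" "z (toN w) = w" using n by auto
qed

lemma toN_z: "a < 4 \<Longrightarrow> toN (z a) = a"
  using toN[of "z a"] z_lt_inj by blast

lemma unit_sq: "(e::4) = 1 \<or> e = 3 \<Longrightarrow> e * e = 1" by auto



lemma z4_num: "(4::4) = 0" "(5::4) = 1" "(6::4) = 2" "(7::4) = 3" "(8::4) = 0" "(9::4) = 1"
  by simp_all

lemma sum_outside':
  assumes "finite A" "K \<subseteq> A" "\<forall>i\<in>A - K. g i = 0"
  shows "sum g A = sum g K"
  using assms by (metis sum.mono_neutral_right)

lemma sum_single:
  assumes "finite A" "p \<in> A" "\<forall>r\<in>A. r \<noteq> p \<longrightarrow> f r = 0"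
  shows "sum f A = f p"
proof -
  have "sum f A = sum f {p}" using assms by (intro sum_outside') auto
  then show ?thesis by simp
qed

lemma sum_pair:
  assumes "finite A" "p \<in> A" "q \<in> A" "p \<noteq> q" "\<forall>r\<in>A. r \<noteq> p \<longrightarrow> r \<noteq> q \<longrightarrow> f r = 0"
  shows "sum f A = f p + f q"
proof -
  have "sum f A = sum f {p,q}" using assms by (intro sum_outside') auto
  then show ?thesis using assms by simp
qed

lemma sum_triple:
  assumes "finite A" "p \<in> A" "q \<in> A" "u \<in> A" "p \<noteq> q" "p \<noteq> u" "q \<noteq> u"
    "\<forall>r\<in>A. r \<noteq> p \<longrightarrow> r \<noteq> q \<longrightarrow> r \<noteq> u \<longrightarrow> f r = 0"
  shows "sum f A = f p + f q + f u"
proof -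
  have "sum f A = sum f {p,q,u}" using assms by (intro sum_outside') auto
  then show ?thesis using assms by (simp add: add.assoc)
qed

lemma half_z: "(u::4) \<noteq> v \<Longrightarrow> 2 * u = 2 * v \<Longrightarrow> u = v + 2"
proof -
  assume h: "u \<noteq> v" "2 * u = 2 * v"
  have "2 * (u - v) = 0" using h(2) by (simp add: algebra_simps)
  moreover have "u - v \<noteq> 0" using h(1) by simp
  ultimately have "u - v = 2" using twice_zero by blast
  then show ?thesis by (simp add: algebra_simps)
qed

lemma two_unit: "(w::4) = 1 \<or> w = 3 \<Longrightarrow> 2 * w = 2" by (auto simp: z4_num)

lemma aff_z:
  fixes f :: "4 \<Rightarrow> 4"
  assumes inj: "inj f" and par: "\<forall>a b. (2 * f a = 2 * f b) = (2 * a = 2 * b)"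
  shows "\<exists>e t. (e = 1 \<or> e = 3) \<and> (\<forall>a. f a = e * a + t)"
proof -
  have f2: "f 2 = f 0 + 2"
  proof (rule half_z)
    have "(2::4) \<noteq> 0" by simp
    then show "f 2 \<noteq> f 0" using inj by (metis injD)
    show "2 * f 2 = 2 * f 0" using par by (simp add: z4_num)
  qed
  have f3: "f 3 = f 1 + 2"
  proof (rule half_z)
    have "(3::4) \<noteq> 1" by simp
    then show "f 3 \<noteq> f 1" using inj by (metis injD)
    show "2 * f 3 = 2 * f 1" using par by (simp add: z4_num)
  qed
  have "2 * f 1 \<noteq> 2 * f 0" using par by simp
  then have "2 * (f 1 - f 0) \<noteq> 0" by (simp add: algebra_simps)
  then have e: "f 1 - f 0 = 1 \<or> f 1 - f 0 = 3" using twice_zero[of "f 1 - f 0"] z4_cases[of "f 1 - f 0"] by blast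
  have e2: "2 * (f 1 - f 0) = 2" by (rule two_unit[OF e])
  show ?thesis
  proof (intro exI conjI)
    show "f 1 - f 0 = 1 \<or> f 1 - f 0 = 3" by (rule e)
    show "\<forall>a. f a = (f 1 - f 0) * a + f 0"
      unfolding z4_all
    proof (intro conjI)
      show "f 0 = (f 1 - f 0) * 0 + f 0" by simp
      show "f 1 = (f 1 - f 0) * 1 + f 0" by simp
      show "f 2 = (f 1 - f 0) * 2 + f 0" using f2 e2 by (simp add: algebra_simps)
      have "(f 1 - f 0) * 3 = (f 1 - f 0) + 2 * (f 1 - f 0)" by (simp add: algebra_simps)
      then show "f 3 = (f 1 - f 0) * 3 + f 0" using f3 e2 by (simp add: algebra_simps)
    qed
  qed
qed

definition pz :: "4 \<Rightarrow> 4" where "pz w = (if w = 0 then 1 else if w = 1 then 0 else w)"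

lemma inj_ne: "inj c \<Longrightarrow> a \<noteq> b \<Longrightarrow> c a \<noteq> c b" by (auto dest: injD)

lemma chi_vals_z:
  fixes c :: "4 \<Rightarrow> 4"
  assumes inj: "inj c" and no2: "\<forall>a. c a \<noteq> a + 2"
    and mis: "\<not> (\<forall>a b. (2 * c a = 2 * c b) = (2 * a = 2 * b))"
  shows "(c 0 = 1 \<and> c 1 = 0 \<and> c 2 = 2 \<and> c 3 = 3) \<or> (c 0 = 0 \<and> c 1 = 2 \<and> c 2 = 1 \<and> c 3 = 3)
    \<or> (c 0 = 0 \<and> c 1 = 1 \<and> c 2 = 3 \<and> c 3 = 2) \<or> (c 0 = 3 \<and> c 1 = 1 \<and> c 2 = 2 \<and> c 3 = 0)"
proof -
  define v where "v i = toN (c i)" for i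
  have cv: "c i = z (v i)" for i unfolding v_def by (simp add: toN)
  have vl: "v 0 < 4" "v 1 < 4" "v 2 < 4" "v 3 < 4" unfolding v_def by (simp_all add: toN)
  have cd: "c 0 \<noteq> c 1" "c 0 \<noteq> c 2" "c 0 \<noteq> c 3" "c 1 \<noteq> c 2" "c 1 \<noteq> c 3" "c 2 \<noteq> c 3"
    by (rule inj_ne[OF inj]; simp)+
  then have d: "v 0 \<noteq> v 1" "v 0 \<noteq> v 2" "v 0 \<noteq> v 3" "v 1 \<noteq> v 2" "v 1 \<noteq> v 3" "v 2 \<noteq> v 3"
    using cv by metis+
  have cn: "c 0 \<noteq> 2" "c 1 \<noteq> 3" "c 2 \<noteq> 0" "c 3 \<noteq> 1"
    using no2[rule_format, of 0] no2[rule_format, of 1] no2[rule_format, of 2] no2[rule_format, of 3]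
    by (simp_all add: z4_num)
  have n: "v 0 \<noteq> 2" "v 1 \<noteq> 3" "v 2 \<noteq> 0" "v 3 \<noteq> 1"
    using cn cv by (metis of_nat_numeral of_nat_0 of_nat_1)+
  have m: "\<not> (v 0 mod 2 = v 2 mod 2 \<and> v 1 mod 2 = v 3 mod 2)"
  proof
    assume a: "v 0 mod 2 = v 2 mod 2 \<and> v 1 mod 2 = v 3 mod 2"
    have ne: "v 0 mod 2 \<noteq> v 1 mod 2" using par_vals[OF vl d] a by blast
    have a': "2 * c 0 = 2 * c 2" "2 * c 1 = 2 * c 3" "2 * c 0 \<noteq> 2 * c 1"
      using a ne unfolding cv z_par by auto
    have "\<forall>a b. (2 * c a = 2 * c b) = (2 * a = 2 * b)"
      unfolding z4_all using a' by (simp add: z4_num)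
    then show False using mis by blast
  qed
  from chi_vals[OF vl d n m] show ?thesis unfolding cv by (elim disjE conjE) simp_all
qed

lemma chi_z:
  fixes c :: "4 \<Rightarrow> 4"
  assumes inj: "inj c" and no2: "\<forall>a. c a \<noteq> a + 2"
    and mis: "\<not> (\<forall>a b. (2 * c a = 2 * c b) = (2 * a = 2 * b))"
  shows "\<exists>t. \<forall>x. c (x + t) = pz x + t"
  using chi_vals_z[OF assms]
proof (elim disjE conjE)
  assume h: "c 0 = 1" "c 1 = 0" "c 2 = 2" "c 3 = 3"
  show ?thesis by (rule exI[of _ 0]) (simp add: z4_all pz_def h z4_num)
next
  assume h: "c 0 = 0" "c 1 = 2" "c 2 = 1" "c 3 = 3"
  show ?thesis by (rule exI[of _ 1]) (simp add: z4_all pz_def h z4_num)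
next
  assume h: "c 0 = 0" "c 1 = 1" "c 2 = 3" "c 3 = 2"
  show ?thesis by (rule exI[of _ 2]) (simp add: z4_all pz_def h z4_num)
next
  assume h: "c 0 = 3" "c 1 = 1" "c 2 = 2" "c 3 = 0"
  show ?thesis by (rule exI[of _ 3]) (simp add: z4_all pz_def h z4_num)
qed

lemma cancel_e: "e * e = (1::4) \<Longrightarrow> e * (c * (e * y)) = c * y"
proof -
  assume h: "e * e = 1"
  have "e * (c * (e * y)) = c * ((e * e) * y)" by (simp add: mult_ac)
  then show ?thesis using h by simp
qed

lemma cancel_e2: "e * e = (1::4) \<Longrightarrow> e * (e * y) = y"
  by (simp add: mult.assoc[symmetric])

lemma core_z:
  fixes \<Psi> :: "nat \<Rightarrow> 4 \<Rightarrow> 4" and d k :: nat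
  assumes d3: "d \<ge> 3" and k: "k < d"
    and inj: "\<forall>r<d. inj (\<Psi> r)"
    and P1: "\<forall>r<d. r \<noteq> k \<longrightarrow> (\<forall>a b. (2 * \<Psi> r a = 2 * \<Psi> r b) = (2 * a = 2 * b))"
    and P2: "\<not> (\<forall>a b. (2 * \<Psi> k a = 2 * \<Psi> k b) = (2 * a = 2 * b))"
    and C1: "\<forall>x. 2 * (\<Sum>r<d. x r) = 0 \<longrightarrow> (\<Sum>r<d. \<Psi> r (x r)) = 0 \<longrightarrow> (\<Sum>r<d. x r) = 0"
  shows "\<exists>h. (\<forall>r<d. inj (h r)) \<and> (\<forall>x. (\<Sum>r<d. h r (x r)) = (\<Sum>r<d. x r) \<and>
          ((\<Sum>r<d. \<Psi> r (h r (x r))) = 0 \<longleftrightarrow> (\<Sum>r\<in>{..<d}-{k}. x r) + pz (x k) = 0))"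
proof -
  define R where "R = {..<d} - {k}"
  have finR: "finite R" by (simp add: R_def)
  have kR: "k \<notin> R" by (simp add: R_def)
  have Rsub: "\<forall>r\<in>R. r < d \<and> r \<noteq> k" by (simp add: R_def)
  have ex: "\<forall>r. \<exists>p::4\<times>4. r \<in> R \<longrightarrow> (fst p = 1 \<or> fst p = 3) \<and> (\<forall>a. \<Psi> r a = fst p * a + snd p)"
  proof
    fix r
    show "\<exists>p::4\<times>4. r \<in> R \<longrightarrow> (fst p = 1 \<or> fst p = 3) \<and> (\<forall>a. \<Psi> r a = fst p * a + snd p)"
    proof (cases "r \<in> R")
      case True
      then have rd: "r < d" "r \<noteq> k" using Rsub by auto
      have pr: "\<forall>a b. (2 * \<Psi> r a = 2 * \<Psi> r b) = (2 * a = 2 * b)" using P1 rd by blast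
      from aff_z[OF inj[rule_format, OF rd(1)] pr]
      obtain e t where "(e = 1 \<or> e = 3) \<and> (\<forall>a. \<Psi> r a = e * a + t)" by blast
      then show ?thesis by (intro exI[of _ "(e,t)"]) simp
    qed simp
  qed
  obtain P where P: "\<forall>r. r \<in> R \<longrightarrow> (fst (P r) = 1 \<or> fst (P r) = 3) \<and> (\<forall>a. \<Psi> r a = fst (P r) * a + snd (P r))"
    using choice[OF ex] by blast
  define e where "e r = fst (P r)" for r
  define t where "t r = snd (P r)" for r
  have eR: "\<forall>r\<in>R. e r = 1 \<or> e r = 3" and PsiR: "\<forall>r\<in>R. \<forall>a. \<Psi> r a = e r * a + t r"
    using P unfolding e_def t_def by auto
  define T where "T = (\<Sum>r\<in>R. t r)"
  have sumPsi: "(\<Sum>r<d. \<Psi> r (x r)) = \<Psi> k (x k) + (\<Sum>r\<in>R. e r * x r) + T" for x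
  proof -
    have "(\<Sum>r<d. \<Psi> r (x r)) = \<Psi> k (x k) + (\<Sum>r\<in>R. \<Psi> r (x r))"
      unfolding R_def using k by (simp add: sum.remove)
    also have "(\<Sum>r\<in>R. \<Psi> r (x r)) = (\<Sum>r\<in>R. e r * x r + t r)" using PsiR by (intro sum.cong) auto
    also have "\<dots> = (\<Sum>r\<in>R. e r * x r) + T" unfolding T_def by (simp add: sum.distrib)
    finally show ?thesis by (simp add: add.assoc)
  qed
  define i0 where "i0 = (if k = 0 then 1 else 0::nat)"
  have i0R: "i0 \<in> R" using d3 by (auto simp: R_def i0_def)
  have i0k: "i0 \<noteq> k" using i0R kR by auto
  have mixed: False if ij: "i \<in> R" "j \<in> R" "i \<noteq> j" "e i = 1" "e j = 3" for i j
  proof -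
    have ik: "i \<noteq> k" "j \<noteq> k" "i < d" "j < d" using ij Rsub by auto
    have key: "2 * (a - (\<Psi> k a + T)) \<noteq> 0" for a
    proof
      assume h: "2 * (a - (\<Psi> k a + T)) = 0"
      define c where "c = - (\<Psi> k a + T)"
      define x1 where "x1 = (\<lambda>_. 0::4)(k := a, i := c)"
      have s1: "(\<Sum>r<d. x1 r) = a + c"
        using sum_pair[of "{..<d}" k i x1] k ik by (auto simp: x1_def)
      have s1e: "(\<Sum>r\<in>R. e r * x1 r) = c"
        using sum_single[of R i "\<lambda>r. e r * x1 r"] finR ij kR by (auto simp: x1_def)
      have x1k: "x1 k = a" using ik by (simp add: x1_def)
      have A1: "(\<Sum>r<d. \<Psi> r (x1 r)) = 0" using sumPsi[of x1] s1e x1k by (simp add: c_def)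
      have A2: "2 * (\<Sum>r<d. x1 r) = 0" using h s1 by (simp add: c_def)
      have z0: "(\<Sum>r<d. x1 r) = 0" using C1 A1 A2 by blast
      have z1: "a + c = 0" using z0 s1 by simp
      define x2 where "x2 = (\<lambda>_. 0::4)(k := a, i := c + 1, j := 1)"
      have s2: "(\<Sum>r<d. x2 r) = a + (c + 1) + 1"
        using sum_triple[of "{..<d}" k i j x2] k ik ij by (auto simp: x2_def)
      have s2e: "(\<Sum>r\<in>R. e r * x2 r) = (c + 1) + 3"
        using sum_pair[of R i j "\<lambda>r. e r * x2 r"] finR ij kR by (auto simp: x2_def)
      have x2k: "x2 k = a" using ik by (simp add: x2_def)
      have e4: "(\<Psi> k a + ((c + 1) + 3) + T) = (\<Psi> k a + c + T) + 4" by (simp add: algebra_simps)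
      have A3: "(\<Sum>r<d. \<Psi> r (x2 r)) = 0" using sumPsi[of x2] s2e x2k e4 by (simp add: c_def z4_num)
      have e5: "a + (c + 1) + 1 = (a + c) + 2" by (simp add: algebra_simps)
      have A4: "2 * (\<Sum>r<d. x2 r) = 0" using s2 e5 z1 by (simp add: z4_num)
      have "(\<Sum>r<d. x2 r) = 0" using C1 A3 A4 by blast
      then have "a + (c + 1) + 1 = 0" using s2 by simp
      then have "(2::4) = 0" using e5 z1 by simp
      then show False by simp
    qed
    have key2: "2 * (a - (\<Psi> k a + T)) = 2" for a using twice_cases key by blast
    have "\<forall>a b. (2 * \<Psi> k a = 2 * \<Psi> k b) = (2 * a = 2 * b)"
    proof (intro allI)
      fix a b
      have "2 * (a - (\<Psi> k a + T)) = 2 * (b - (\<Psi> k b + T))" using key2 by simp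
      then have "2 * \<Psi> k a - 2 * \<Psi> k b = 2 * a - 2 * b" by (simp add: algebra_simps)
      then show "(2 * \<Psi> k a = 2 * \<Psi> k b) = (2 * a = 2 * b)" by (metis eq_iff_diff_eq_0)
    qed
    with P2 show False by blast
  qed
  have eq: "\<forall>r\<in>R. e r = e i0"
  proof
    fix r assume r: "r \<in> R"
    show "e r = e i0"
    proof (rule ccontr)
      assume ne: "e r \<noteq> e i0"
      then have ri: "r \<noteq> i0" by auto
      have "e r = 1 \<or> e r = 3" "e i0 = 1 \<or> e i0 = 3" using eR r i0R by auto
      then have "(e r = 1 \<and> e i0 = 3) \<or> (e r = 3 \<and> e i0 = 1)" using ne by auto
      then show False using mixed[of r i0] mixed[of i0 r] r i0R ri by auto
    qed
  qed
  define e0 where "e0 = e i0"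
  have e0: "e0 = 1 \<or> e0 = 3" using eR i0R by (simp add: e0_def)
  have e0sq: "e0 * e0 = 1" using unit_sq[OF e0] .
  have sumPsi0: "(\<Sum>r<d. \<Psi> r (x r)) = \<Psi> k (x k) + e0 * (\<Sum>r\<in>R. x r) + T" for x
  proof -
    have "(\<Sum>r\<in>R. e r * x r) = (\<Sum>r\<in>R. e0 * x r)" using eq by (intro sum.cong) (auto simp: e0_def)
    then show ?thesis using sumPsi[of x] by (simp add: sum_distrib_left)
  qed
  define \<chi> where "\<chi> a = e0 * (T + \<Psi> k a)" for a
  have chinj: "inj \<chi>"
  proof (rule injI)
    fix a b assume "\<chi> a = \<chi> b"
    then have "e0 * \<chi> a = e0 * \<chi> b" by simp
    then have "T + \<Psi> k a = T + \<Psi> k b" by (simp add: \<chi>_def cancel_e2[OF e0sq])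
    then have "\<Psi> k a = \<Psi> k b" by simp
    then show "a = b" using inj k by (auto dest: injD)
  qed
  have chno2: "\<forall>a. \<chi> a \<noteq> a + 2"
  proof (intro allI notI)
    fix a assume h: "\<chi> a = a + 2"
    define v where "v = - \<chi> a"
    define x where "x = (\<lambda>_. 0::4)(k := a, i0 := v)"
    have sx: "(\<Sum>r<d. x r) = a + v"
      using sum_pair[of "{..<d}" k i0 x] k i0R Rsub i0k by (auto simp: x_def)
    have sxR: "(\<Sum>r\<in>R. x r) = v"
      using sum_single[of R i0 x] finR i0R kR by (auto simp: x_def)
    have xk: "x k = a" using i0k by (simp add: x_def)
    have ev: "e0 * v = - (T + \<Psi> k a)" unfolding v_def \<chi>_def using cancel_e2[OF e0sq] by simp
    have A: "(\<Sum>r<d. \<Psi> r (x r)) = 0" using sumPsi0[of x] sxR xk ev by simp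
    have B: "(\<Sum>r<d. x r) = 2" using sx h by (simp add: v_def neg_two)
    have "2 * (\<Sum>r<d. x r) = 0" using B by (simp add: z4_num)
    then have "(\<Sum>r<d. x r) = 0" using C1 A by blast
    then show False using B by simp
  qed
  have ech: "e0 * (2 * \<chi> a) = 2 * T + 2 * \<Psi> k a" for a
    unfolding \<chi>_def using cancel_e[OF e0sq] by (simp add: distrib_left)
  have chpar: "(2 * \<chi> a = 2 * \<chi> b) = (2 * \<Psi> k a = 2 * \<Psi> k b)" for a b
  proof
    assume "2 * \<chi> a = 2 * \<chi> b"
    then have "e0 * (2 * \<chi> a) = e0 * (2 * \<chi> b)" by simp
    then show "2 * \<Psi> k a = 2 * \<Psi> k b" unfolding ech by simp
  next
    assume "2 * \<Psi> k a = 2 * \<Psi> k b"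
    then have "e0 * (2 * \<chi> a) = e0 * (2 * \<chi> b)" unfolding ech by simp
    then have "e0 * (e0 * (2 * \<chi> a)) = e0 * (e0 * (2 * \<chi> b))" by simp
    then show "2 * \<chi> a = 2 * \<chi> b" unfolding cancel_e2[OF e0sq] .
  qed
  have chmis: "\<not> (\<forall>a b. (2 * \<chi> a = 2 * \<chi> b) = (2 * a = 2 * b))"
    using P2 unfolding chpar .
  from chi_z[OF chinj chno2 chmis] obtain tt where tt: "\<forall>x. \<chi> (x + tt) = pz x + tt" by blast
  define h where "h r = (if r = k then (\<lambda>w. w + tt) else if r = i0 then (\<lambda>w. w - tt) else id)" for r
  define \<delta> where "\<delta> r = (if r = k then tt else if r = i0 then - tt else 0)" for r
  have hx: "h r w = w + \<delta> r" for r w by (simp add: h_def \<delta>_def)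
  have S\<delta>: "(\<Sum>r<d. \<delta> r) = 0"
    using sum_pair[of "{..<d}" k i0 \<delta>] k i0R Rsub i0k by (auto simp: \<delta>_def)
  have S\<delta>R: "(\<Sum>r\<in>R. \<delta> r) = - tt"
    using sum_single[of R i0 \<delta>] finR i0R kR i0k by (auto simp: \<delta>_def)
  show ?thesis
  proof (intro exI[of _ h] conjI)
    show "\<forall>r<d. inj (h r)" by (auto simp: hx inj_def)
    show "\<forall>x. (\<Sum>r<d. h r (x r)) = (\<Sum>r<d. x r) \<and>
          ((\<Sum>r<d. \<Psi> r (h r (x r))) = 0 \<longleftrightarrow> (\<Sum>r\<in>{..<d}-{k}. x r) + pz (x k) = 0)"
    proof
      fix x :: "nat \<Rightarrow> 4"
      have s1: "(\<Sum>r<d. h r (x r)) = (\<Sum>r<d. x r)" unfolding hx by (simp add: sum.distrib S\<delta>)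
      have SR: "(\<Sum>r\<in>R. h r (x r)) = (\<Sum>r\<in>R. x r) - tt" unfolding hx by (simp add: sum.distrib S\<delta>R)
      have hk: "h k (x k) = x k + tt" by (simp add: h_def)
      define V where "V = (\<Sum>r\<in>R. x r)"
      have main: "(\<Sum>r<d. \<Psi> r (h r (x r))) = \<Psi> k (x k + tt) + e0 * (V - tt) + T"
        using sumPsi0[of "\<lambda>r. h r (x r)"] SR hk by (simp add: V_def)
      have m1: "e0 * (\<Psi> k (x k + tt) + e0 * (V - tt) + T) = \<chi> (x k + tt) + (V - tt)"
        unfolding \<chi>_def by (simp add: distrib_left cancel_e2[OF e0sq] add_ac)
      have m2: "\<chi> (x k + tt) + (V - tt) = V + pz (x k)" using tt by simp
      have mult: "e0 * (\<Sum>r<d. \<Psi> r (h r (x r))) = V + pz (x k)" using main m1 m2 by simp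
      have iff: "(\<Sum>r<d. \<Psi> r (h r (x r))) = 0 \<longleftrightarrow> e0 * (\<Sum>r<d. \<Psi> r (h r (x r))) = 0"
      proof
        assume "e0 * (\<Sum>r<d. \<Psi> r (h r (x r))) = 0"
        then have "e0 * (e0 * (\<Sum>r<d. \<Psi> r (h r (x r)))) = 0" by simp
        then show "(\<Sum>r<d. \<Psi> r (h r (x r))) = 0" unfolding cancel_e2[OF e0sq] .
      qed simp
      show "(\<Sum>r<d. h r (x r)) = (\<Sum>r<d. x r) \<and>
          ((\<Sum>r<d. \<Psi> r (h r (x r))) = 0 \<longleftrightarrow> (\<Sum>r\<in>{..<d}-{k}. x r) + pz (x k) = 0)"
        using s1 iff mult by (simp add: V_def R_def)
    qed
  qed
qed



lemma sum_outside:
  assumes "finite A" "K \<subseteq> A" "\<forall>i\<in>A - K. g i = 0"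
  shows "sum g A = sum g K"
  using assms by (metis sum.mono_neutral_right)

lemma idxI: "(\<forall>i<d. \<alpha> i < n) \<Longrightarrow> (\<forall>i\<ge>d. \<alpha> i = 0) \<Longrightarrow> \<alpha> \<in> idx d n"
  by (simp add: idx_def)

lemma idxD: "\<alpha> \<in> idx d n \<Longrightarrow> i < d \<Longrightarrow> \<alpha> i < n"
  "\<alpha> \<in> idx d n \<Longrightarrow> d \<le> i \<Longrightarrow> \<alpha> i = 0"
  by (auto simp: idx_def)

definition Mrep :: "nat \<Rightarrow> (nat \<Rightarrow> nat \<Rightarrow> nat) \<Rightarrow> matrix" where
  "Mrep d \<rho> \<alpha> = (if (\<Sum>i<d. \<rho> i (\<alpha> i)) mod 4 = 0 then 1 else 0)"

lemma perm4_lt: "p permutes {..<(4::nat)} \<Longrightarrow> a < 4 \<Longrightarrow> p a < 4"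
  by (meson lessThan_iff permutes_in_image)

lemma perm4_inv: "p permutes {..<(4::nat)} \<Longrightarrow> p (inv p x) = x" "p permutes {..<(4::nat)} \<Longrightarrow> inv p (p x) = x"
  by (auto simp: permutes_inverses)

lemma equiv_rep:
  assumes "equivalent d 4 X (Mmat 4 d)"
  shows "\<exists>\<rho>. (\<forall>i<d. \<rho> i permutes {..<4}) \<and> (\<forall>\<alpha>\<in>idx d 4. X \<alpha> = Mrep d \<rho> \<alpha>)"
  using assms unfolding equivalent_def
proof (induction rule: converse_rtranclp_induct)
  case base
  show ?case by (intro exI[of _ "\<lambda>i. id"]) (simp add: Mrep_def Mmat_def permutes_id flip: id_def)
next
  case (step X Y)
  then obtain \<rho> where rp: "\<forall>i<d. \<rho> i permutes {..<4}" and rY: "\<forall>\<alpha>\<in>idx d 4. Y \<alpha> = Mrep d \<rho> \<alpha>"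
    by blast
  from step(1) show ?case unfolding equiv_step_def
  proof (elim disjE exE conjE)
    fix \<tau> assume tp: "\<tau> permutes {..<d}" and tY: "\<forall>\<alpha>\<in>idx d 4. Y \<alpha> = X (\<alpha> \<circ> \<tau>)"
    show ?case
    proof (intro exI[of _ "\<lambda>j. \<rho> (\<tau> j)"] conjI allI impI ballI)
      fix j assume "j < d"
      then have "\<tau> j < d" using tp by (meson lessThan_iff permutes_in_image)
      then show "\<rho> (\<tau> j) permutes {..<4}" using rp by blast
    next
      fix \<beta> assume b: "\<beta> \<in> idx d 4"
      let ?a = "\<beta> \<circ> inv \<tau>"
      have ti: "inv \<tau> permutes {..<d}" using tp by (rule permutes_inv)
      have a: "?a \<in> idx d 4"
      proof (rule idxI)
        show "\<forall>i<d. ?a i < 4" using b ti by (auto simp: idx_def dest: perm4_lt) (meson lessThan_iff permutes_in_image)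
        show "\<forall>i\<ge>d. ?a i = 0" using b ti by (auto simp: idx_def permutes_not_in)
      qed
      have "?a \<circ> \<tau> = \<beta>" using tp by (auto simp: fun_eq_iff permutes_inverses)
      then have "X \<beta> = Y ?a" using tY a by metis
      also have "\<dots> = Mrep d \<rho> ?a" using rY a by blast
      also have "(\<Sum>i<d. \<rho> i (?a i)) = (\<Sum>j<d. \<rho> (\<tau> j) (\<beta> j))"
      proof -
        have "(\<Sum>j<d. \<rho> (\<tau> j) (\<beta> j)) = (\<Sum>j<d. \<rho> (\<tau> (inv \<tau> j)) (\<beta> (inv \<tau> j)))"
          using sum.permute[OF ti, of "\<lambda>j. \<rho> (\<tau> j) (\<beta> j)"] by (simp add: comp_def)
        also have "\<dots> = (\<Sum>i<d. \<rho> i (?a i))" using tp by (simp add: permutes_inverses)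
        finally show ?thesis by simp
      qed
      then have "Mrep d \<rho> ?a = Mrep d (\<lambda>j. \<rho> (\<tau> j)) \<beta>" by (simp add: Mrep_def)
      finally show "X \<beta> = Mrep d (\<lambda>j. \<rho> (\<tau> j)) \<beta>" .
    qed
  next
    fix i \<pi> assume i: "i < d" and pp: "\<pi> permutes {..<4}"
      and pY: "\<forall>\<alpha>\<in>idx d 4. Y \<alpha> = X (\<alpha>(i := \<pi> (\<alpha> i)))"
    show ?case
    proof (intro exI[of _ "\<rho>(i := \<rho> i \<circ> inv \<pi>)"] conjI allI impI ballI)
      fix j assume "j < d"
      then show "(\<rho>(i := \<rho> i \<circ> inv \<pi>)) j permutes {..<4}"
        using rp pp by (auto intro: permutes_compose permutes_inv)
    next
      fix \<beta> assume b: "\<beta> \<in> idx d 4"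
      let ?a = "\<beta>(i := inv \<pi> (\<beta> i))"
      have a: "?a \<in> idx d 4"
        using b i perm4_lt[OF permutes_inv[OF pp]] by (auto simp: idx_def)
      have "?a(i := \<pi> (?a i)) = \<beta>" using pp by (auto simp: fun_eq_iff perm4_inv)
      then have "X \<beta> = Y ?a" using pY a by metis
      also have "\<dots> = Mrep d \<rho> ?a" using rY a by blast
      also have "\<dots> = Mrep d (\<rho>(i := \<rho> i \<circ> inv \<pi>)) \<beta>"
        unfolding Mrep_def by (rule arg_cong[where f="\<lambda>x. if x mod 4 = 0 then 1 else 0"], rule sum.cong) auto
      finally show "X \<beta> = Mrep d (\<rho>(i := \<rho> i \<circ> inv \<pi>)) \<beta>" .
    qed
  qed
qed


definition mkv :: "nat \<Rightarrow> (nat \<Rightarrow> nat \<Rightarrow> nat) \<Rightarrow> (nat \<Rightarrow> nat) \<Rightarrow> (nat \<Rightarrow> nat)" where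
  "mkv d \<rho> x = (\<lambda>r. if r < d then inv (\<rho> r) (x r) else 0)"

lemma mkv_idx: "\<forall>r<d. \<rho> r permutes {..<4} \<Longrightarrow> \<forall>r<d. x r < 4 \<Longrightarrow> mkv d \<rho> x \<in> idx d 4"
  by (auto simp: mkv_def idx_def intro: perm4_lt permutes_inv)

lemma mkv_app: "\<forall>r<d. \<rho> r permutes {..<4} \<Longrightarrow> r < d \<Longrightarrow> \<rho> r (mkv d \<rho> x r) = x r"
  by (auto simp: mkv_def perm4_inv)

lemma sum_two:
  assumes "finite A" "j \<in> A" "l \<in> A" "j \<noteq> l"
  shows "sum f A = f j + f l + sum f (A - {j,l})"
proof -
  have "sum f A = f j + sum f (A - {j})" using assms by (simp add: sum.remove)
  also have "sum f (A - {j}) = f l + sum f (A - {j} - {l})" using assms by (simp add: sum.remove)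
  also have "A - {j} - {l} = A - {j,l}" by auto
  finally show ?thesis by (simp add: add.assoc)
qed

lemma par_flip: "((a::nat) + b + r + w) mod 2 = 0 \<Longrightarrow> a' + a = 1 \<Longrightarrow> b' + b = 1 \<Longrightarrow> (a' + b' + r + w) mod 2 = 0"
  by presburger

definition bcond :: "nat \<Rightarrow> (nat \<Rightarrow> nat) \<Rightarrow> ((nat \<Rightarrow> nat) \<Rightarrow> nat) \<Rightarrow> nat \<Rightarrow> (nat \<Rightarrow> nat) \<Rightarrow> bool" where
  "bcond d E lb s \<alpha> \<longleftrightarrow> (\<Sum>i<d. pf (E i) (\<alpha> i)) mod 2 = s
         \<and> ((\<Sum>i<d. muf (E i) (\<alpha> i)) + lb (pvec d E \<alpha>)) mod 2 = 0"

lemma blockperm_bcond: "blockperm d E lb s \<alpha> = (if bcond d E lb s \<alpha> then 1 else 0)"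
  by (simp add: blockperm_def bcond_def)

lemma double_move:
  assumes E: "\<forall>i<d. E i \<in> {1,2,3}" and a: "\<alpha> \<in> idx d 4" and jl: "j < d" "l < d" "j \<noteq> l"
    and c: "bcond d E lb s \<alpha>"
  shows "bcond d E lb s (\<alpha>(j := pfp (E j) (\<alpha> j), l := pfp (E l) (\<alpha> l)))"
proof -
  let ?b = "\<alpha>(j := pfp (E j) (\<alpha> j), l := pfp (E l) (\<alpha> l))"
  have aj: "\<alpha> j < 4" "\<alpha> l < 4" using a jl by (auto simp: idx_def)
  have pfe: "\<forall>i<d. pf (E i) (?b i) = pf (E i) (\<alpha> i)"
    using E aj jl pfp_facts(4) by auto
  have pv: "pvec d E ?b = pvec d E \<alpha>" unfolding pvec_def using pfe by (auto simp: fun_eq_iff)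
  have ps: "(\<Sum>i<d. pf (E i) (?b i)) = (\<Sum>i<d. pf (E i) (\<alpha> i))" using pfe by (auto intro: sum.cong)
  have s1: "(\<Sum>i<d. muf (E i) (?b i)) = muf (E j) (?b j) + muf (E l) (?b l) + (\<Sum>i\<in>{..<d} - {j,l}. muf (E i) (?b i))"
    using jl by (intro sum_two) auto
  have s2: "(\<Sum>i<d. muf (E i) (\<alpha> i)) = muf (E j) (\<alpha> j) + muf (E l) (\<alpha> l) + (\<Sum>i\<in>{..<d} - {j,l}. muf (E i) (\<alpha> i))"
    using jl by (intro sum_two) auto
  have s3: "(\<Sum>i\<in>{..<d} - {j,l}. muf (E i) (?b i)) = (\<Sum>i\<in>{..<d} - {j,l}. muf (E i) (\<alpha> i))"
    by (rule sum.cong) auto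
  have m1: "muf (E j) (?b j) + muf (E j) (\<alpha> j) = 1" using E jl aj pfp_facts(5) by auto
  have m2: "muf (E l) (?b l) + muf (E l) (\<alpha> l) = 1" using E jl aj pfp_facts(5) by auto
  have "(muf (E j) (\<alpha> j) + muf (E l) (\<alpha> l) + (\<Sum>i\<in>{..<d} - {j,l}. muf (E i) (\<alpha> i)) + lb (pvec d E \<alpha>)) mod 2 = 0"
    using c unfolding bcond_def s2 by simp
  from par_flip[OF this m1 m2] show ?thesis using c unfolding bcond_def ps pv s1 s3 by simp
qed


lemma Mrep_z: "Mrep d \<rho> \<alpha> = (if (\<Sum>r<d. z (\<rho> r (\<alpha> r))) = 0 then 1 else 0)"
proof -
  have h: "(\<Sum>r<d. z (\<rho> r (\<alpha> r))) = z (\<Sum>r<d. \<rho> r (\<alpha> r))" by simp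
  show ?thesis unfolding Mrep_def h z_eq0_iff by simp
qed

lemma bp_key:
  assumes d3: "d \<ge> 3" and E: "\<forall>i<d. E i \<in> {1,2,3}" and rp: "\<forall>i<d. \<rho> i permutes {..<4}"
    and eqv: "\<forall>\<alpha>\<in>idx d 4. blockperm d E lb s \<alpha> = Mrep d \<rho> \<alpha>" and i: "i < d" and a: "a < 4"
  shows "z (\<rho> i (pfp (E i) a)) = z (\<rho> i a) + 2"
proof -
  define l where "l = (if i = 0 then 1 else 0::nat)"
  define m where "m = (if i = 2 then 1 else 2::nat)"
  have lm: "l < d" "m < d" "l \<noteq> i" "m \<noteq> i" "l \<noteq> m" using d3 by (auto simp: l_def m_def)
  have rel: "z (\<rho> i (pfp (E i) a')) + z (\<rho> l (pfp (E l) b)) = z (\<rho> i a') + z (\<rho> l b)"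
    if a': "a' < 4" and b: "b < 4" for a' b
  proof -
    define c where "c = toN (- (z (\<rho> i a') + z (\<rho> l b)))"
    have zc: "z c = - (z (\<rho> i a') + z (\<rho> l b))" "c < 4" unfolding c_def by (simp_all add: toN)
    define x where "x = ((\<lambda>_. 0::nat)(i := \<rho> i a', l := \<rho> l b, m := c))"
    have xl: "\<forall>r<d. x r < 4" using rp i lm a' b zc(2) by (auto simp: x_def perm4_lt)
    define \<alpha> where "\<alpha> = mkv d \<rho> x"
    have ai: "\<alpha> \<in> idx d 4" unfolding \<alpha>_def using mkv_idx[OF rp xl] .
    have ax: "\<forall>r<d. \<rho> r (\<alpha> r) = x r" unfolding \<alpha>_def using mkv_app[OF rp] by blast
    have aia: "\<alpha> i = a'" "\<alpha> l = b"
      using rp i lm by (auto simp: \<alpha>_def mkv_def x_def perm4_inv)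
    have gensum: "(\<Sum>r<d. z (\<rho> r (\<beta> r))) = z (\<rho> i (\<beta> i)) + z (\<rho> l (\<beta> l)) + z c"
      if "\<forall>r. r \<noteq> i \<longrightarrow> r \<noteq> l \<longrightarrow> \<beta> r = \<alpha> r" for \<beta>
    proof -
      have "(\<Sum>r<d. z (\<rho> r (\<beta> r))) = z (\<rho> i (\<beta> i)) + z (\<rho> l (\<beta> l)) + z (\<rho> m (\<beta> m))"
        by (rule sum_triple) (use that ax lm i in \<open>auto simp: x_def\<close>)
      also have "\<rho> m (\<beta> m) = c" using that ax lm by (auto simp: x_def)
      finally show ?thesis .
    qed
    have "(\<Sum>r<d. z (\<rho> r (\<alpha> r))) = 0" using gensum[of \<alpha>] aia zc by simp
    then have "Mrep d \<rho> \<alpha> = 1" by (simp add: Mrep_z)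
    then have "bcond d E lb s \<alpha>" using eqv ai by (metis blockperm_bcond zero_neq_one)
    from double_move[OF E ai i lm(1) lm(3)[symmetric] this]
    have bc: "bcond d E lb s (\<alpha>(i := pfp (E i) (\<alpha> i), l := pfp (E l) (\<alpha> l)))" .
    let ?b = "\<alpha>(i := pfp (E i) (\<alpha> i), l := pfp (E l) (\<alpha> l))"
    have bi: "?b \<in> idx d 4" using ai i lm E pfp_facts(1) aia a' b by (auto simp: idx_def)
    have "Mrep d \<rho> ?b = 1" using eqv bi bc by (metis blockperm_bcond)
    then have "(\<Sum>r<d. z (\<rho> r (?b r))) = 0" by (simp add: Mrep_z split: if_splits)
    moreover have "(\<Sum>r<d. z (\<rho> r (?b r))) = z (\<rho> i (pfp (E i) a')) + z (\<rho> l (pfp (E l) b)) + z c"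
      using gensum[of ?b] aia lm by simp
    ultimately show ?thesis using zc(1) by (simp add: algebra_simps eq_neg_iff_add_eq_0)
  qed
  have r1: "z (\<rho> i (pfp (E i) a)) + z (\<rho> l (pfp (E l) 0)) = z (\<rho> i a) + z (\<rho> l 0)"
    using rel a by simp
  have r2: "z (\<rho> i a) + z (\<rho> l (pfp (E l) 0)) = z (\<rho> i (pfp (E i) a)) + z (\<rho> l 0)"
    using rel[of "pfp (E i) a" 0] a pfp_facts(1,3) E i by simp
  have lt: "\<rho> i a < 4" "\<rho> i (pfp (E i) a) < 4" using rp i a pfp_facts(1) E perm4_lt by auto
  have ne: "\<rho> i (pfp (E i) a) \<noteq> \<rho> i a"
    using permutes_inj[OF rp[rule_format, OF i]] pfp_facts(2) E i a by (metis injD)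
  then have ne': "z (\<rho> i (pfp (E i) a)) \<noteq> z (\<rho> i a)" using z_lt_inj lt by blast
  have "2 * z (\<rho> i (pfp (E i) a)) = 2 * z (\<rho> i a)"
  proof -
    have "z (\<rho> i (pfp (E i) a)) - z (\<rho> i a) = z (\<rho> l 0) - z (\<rho> l (pfp (E l) 0))"
      using r1 by (simp add: algebra_simps)
    moreover have "z (\<rho> i a) - z (\<rho> i (pfp (E i) a)) = z (\<rho> l 0) - z (\<rho> l (pfp (E l) 0))"
      using r2 by (simp add: algebra_simps)
    ultimately have "z (\<rho> i (pfp (E i) a)) - z (\<rho> i a) = z (\<rho> i a) - z (\<rho> i (pfp (E i) a))" by simp
    then show ?thesis by (simp add: algebra_simps)
  qed
  from half_z[OF ne' this] show ?thesis .
qed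

lemma bp_pair:
  assumes d3: "d \<ge> 3" and E: "\<forall>i<d. E i \<in> {1,2,3}" and rp: "\<forall>i<d. \<rho> i permutes {..<4}"
    and eqv: "\<forall>\<alpha>\<in>idx d 4. blockperm d E lb s \<alpha> = Mrep d \<rho> \<alpha>" and i: "i < d" and a: "a < 4" and b: "b < 4"
  shows "pf (E i) a = pf (E i) b \<longleftrightarrow> 2 * z (\<rho> i a) = 2 * z (\<rho> i b)"
proof -
  have k: "z (\<rho> i (pfp (E i) a)) = z (\<rho> i a) + 2" by (rule bp_key[OF d3 E rp eqv i a])
  have lt: "\<rho> i a < 4" "\<rho> i b < 4" "\<rho> i (pfp (E i) a) < 4" using rp i a b perm4_lt pfp_facts(1) E by auto
  have inj: "inj (\<rho> i)" using permutes_inj[OF rp[rule_format, OF i]] .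
  show ?thesis
  proof
    assume "pf (E i) a = pf (E i) b"
    then have "b = a \<or> b = pfp (E i) a" using pf_eq_iff E i a b by blast
    then show "2 * z (\<rho> i a) = 2 * z (\<rho> i b)"
    proof
      assume "b = pfp (E i) a"
      then have "2 * z (\<rho> i b) = 2 * z (\<rho> i a) + 4" using k by (simp add: algebra_simps)
      then show ?thesis by (simp add: z4_num)
    qed simp
  next
    assume h: "2 * z (\<rho> i a) = 2 * z (\<rho> i b)"
    show "pf (E i) a = pf (E i) b"
    proof (cases "\<rho> i b = \<rho> i a")
      case True
      then have "b = a" using inj by (metis injD)
      then show ?thesis by simp
    next
      case False
      then have "z (\<rho> i b) \<noteq> z (\<rho> i a)" using z_lt_inj lt by blast
      from half_z[OF this h[symmetric]] have "z (\<rho> i b) = z (\<rho> i (pfp (E i) a))" using k by simp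
      then have "\<rho> i b = \<rho> i (pfp (E i) a)" using z_lt_inj lt by blast
      then have "b = pfp (E i) a" using inj by (metis injD)
      then show ?thesis using pf_eq_iff E i a b by blast
    qed
  qed
qed



lemma card_box:
  assumes T: "\<forall>i<d. T i \<subseteq> {..<4}"
  shows "card {\<alpha> \<in> idx d 4. \<forall>i<d. \<alpha> i \<in> T i} = (\<Prod>i<d. card (T i))"
proof -
  let ?A = "{\<alpha> \<in> idx d 4. \<forall>i<d. \<alpha> i \<in> T i}"
  have "bij_betw (\<lambda>\<alpha>. restrict \<alpha> {..<d}) ?A (PiE {..<d} T)"
  proof (rule bij_betw_byWitness[where f' = "\<lambda>\<beta> i. if i < d then \<beta> i else 0"])
    show "\<forall>a\<in>?A. (\<lambda>i. if i < d then restrict a {..<d} i else 0) = a"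
    proof
      fix \<alpha> assume a: "\<alpha> \<in> ?A"
      show "(\<lambda>i. if i < d then restrict \<alpha> {..<d} i else 0) = \<alpha>"
      proof
        fix i show "(if i < d then restrict \<alpha> {..<d} i else 0) = \<alpha> i" using a by (simp add: idx_def)
      qed
    qed
    show "\<forall>a'\<in>PiE {..<d} T. restrict (\<lambda>i. if i < d then a' i else 0) {..<d} = a'"
      by (auto simp: fun_eq_iff PiE_def extensional_def)
    show "(\<lambda>\<alpha>. restrict \<alpha> {..<d}) ` ?A \<subseteq> PiE {..<d} T"
    proof (rule image_subsetI)
      fix \<alpha> assume "\<alpha> \<in> ?A"
      then show "restrict \<alpha> {..<d} \<in> PiE {..<d} T" by (subst restrict_PiE_iff) auto
    qed
    show "(\<lambda>\<beta> i. if i < d then \<beta> i else 0) ` PiE {..<d} T \<subseteq> ?A"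
      using T by (auto simp: idx_def PiE_def Pi_def subset_iff)
  qed
  then have "card ?A = card (PiE {..<d} T)" by (rule bij_betw_same_card)
  then show ?thesis by (simp add: card_PiE)
qed

lemma prod_2_1: "(\<Prod>i<(d::nat). (if P i then 2 else 1::nat)) = 2 ^ card {i\<in>{..<d}. P i}"
proof -
  have "(\<Prod>i<d. (if P i then 2 else 1::nat)) = (\<Prod>i\<in>{..<d} \<inter> {x. P x}. 2) * (\<Prod>i\<in>{..<d} \<inter> - {x. P x}. 1)"
    by (rule prod.If_cases) simp
  also have "\<dots> = 2 ^ card ({..<d} \<inter> {x. P x})" by simp
  also have "{..<d} \<inter> {x. P x} = {i\<in>{..<d}. P i}" by auto
  finally show ?thesis .
qed

lemma tess_k:
  assumes E: "\<forall>i<d. E i \<in> {1,2,3}" and E': "\<forall>i<d. E' i \<in> {1,2,3}" and d3: "d \<ge> 3"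
    and t: "tess_index d E s E' s' = ereal (real (d - 1))"
  shows "\<exists>k<d. E k \<noteq> E' k \<and> (\<forall>i<d. i \<noteq> k \<longrightarrow> E i = E' i)"
proof -
  define G where "G = {i\<in>{..<d}. E i = E' i}"
  define N where "N = card G"
  define J where "J = {j. \<exists>C\<in>filled_subcubes d E s. \<exists>C'\<in>filled_subcubes d E' s'.
               C \<inter> C' \<noteq> {} \<and> card (C \<inter> C') = 2 ^ j}"
  have JN: "J \<subseteq> {N}"
  proof
    fix j assume "j \<in> J"
    then obtain y y' where y: "y \<in> Qs d s" and y': "y' \<in> Qs d s'"
      and ne: "subcube d E y \<inter> subcube d E' y' \<noteq> {}"
      and c: "card (subcube d E y \<inter> subcube d E' y') = 2 ^ j"
      unfolding J_def filled_subcubes_def by blast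
    define T where "T i = {a. a < 4 \<and> pf (E i) a = y i \<and> pf (E' i) a = y' i}" for i
    have eqs: "subcube d E y \<inter> subcube d E' y' = {\<alpha> \<in> idx d 4. \<forall>i<d. \<alpha> i \<in> T i}"
      by (auto simp: subcube_def T_def idx_def)
    have Tsub: "\<forall>i<d. T i \<subseteq> {..<4}" by (auto simp: T_def)
    have Tne: "T i \<noteq> {}" if "i < d" for i using ne that unfolding eqs by blast
    have yl: "y i < 2" "y' i < 2" if "i < d" for i
      using y y' that by (auto simp: Qs_def cube_def)
    have cT: "card (T i) = (if E i = E' i then 2 else 1)" if "i < d" for i
      unfolding T_def by (rule cardT) (use E E' yl Tne that in \<open>auto simp: T_def\<close>)
    have "card (subcube d E y \<inter> subcube d E' y') = (\<Prod>i<d. card (T i))"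
      unfolding eqs by (rule card_box[OF Tsub])
    also have "\<dots> = (\<Prod>i<d. (if E i = E' i then 2 else 1::nat))" using cT by (intro prod.cong) auto
    also have "\<dots> = 2 ^ N" unfolding N_def G_def by (rule prod_2_1)
    finally have "(2::nat) ^ j = 2 ^ N" using c by simp
    then show "j \<in> {N}" by simp
  qed
  have tJ: "tess_index d E s E' s' = Sup ((\<lambda>j. ereal (real j)) ` J)"
    unfolding tess_index_def J_def ..
  have "J \<noteq> {}"
  proof
    assume "J = {}"
    then have "tess_index d E s E' s' = Sup {}" using tJ by simp
    then show False using t by (simp add: bot_ereal_def)
  qed
  then have "J = {N}" using JN by blast
  then have "ereal (real N) = ereal (real (d - 1))" using tJ t by simp
  then have N1: "N = d - 1" by simp
  have Gs: "G \<subseteq> {..<d}" by (auto simp: G_def)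
  have "card ({..<d} - G) = d - N" using Gs unfolding N_def by (simp add: card_Diff_subset finite_subset)
  then have "card ({..<d} - G) = 1" using N1 d3 by simp
  then obtain k where k: "{..<d} - G = {k}" by (rule card_1_singletonE)
  show ?thesis
  proof (intro exI[of _ k] conjI allI impI)
    show "k < d" using k by auto
    show "E k \<noteq> E' k" using k by (auto simp: G_def)
    fix i assume "i < d" "i \<noteq> k"
    then show "E i = E' i" using k by (auto simp: G_def)
  qed
qed



lemma parity_pt:
  assumes d3: "d \<ge> 3" and E: "\<forall>i<d. E i \<in> {1,2,3}" and rp: "\<forall>i<d. \<rho> i permutes {..<4}"
    and eqv: "\<forall>\<alpha>\<in>idx d 4. blockperm d E lb s \<alpha> = Mrep d \<rho> \<alpha>" and i: "i < d" and a: "a < 4"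
  shows "2 * z (pf (E i) a) = 2 * z (\<rho> i a) + 2 * z (pf (E i) (inv (\<rho> i) 0))"
proof -
  let ?b = "inv (\<rho> i) 0"
  have bl: "?b < 4" using perm4_lt[OF permutes_inv[OF rp[rule_format, OF i]]] by simp
  have rb: "\<rho> i ?b = 0" using perm4_inv(1)[OF rp[rule_format, OF i]] .
  have pp: "pf (E i) a = pf (E i) ?b \<longleftrightarrow> 2 * z (\<rho> i a) = 0"
    using bp_pair[OF d3 E rp eqv i a bl] rb by simp
  show ?thesis
  proof (cases "2 * z (\<rho> i a) = 0")
    case True
    then show ?thesis using pp by simp
  next
    case False
    then have t: "2 * z (\<rho> i a) = 2" using twice_cases by blast
    have "pf (E i) a \<noteq> pf (E i) ?b" using pp False by simp
    then have "(pf (E i) a = 0 \<and> pf (E i) ?b = 1) \<or> (pf (E i) a = 1 \<and> pf (E i) ?b = 0)"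
      using pf_le1[of "E i" a] pf_le1[of "E i" ?b] by auto
    then show ?thesis using t by (auto simp: z4_num)
  qed
qed

lemma C1_nat:
  assumes d3: "d \<ge> 3" and bpp: "bp_params d E lb s" and rp: "\<forall>i<d. \<rho> i permutes {..<4}"
    and eqv: "\<forall>\<alpha>\<in>idx d 4. blockperm d E lb s \<alpha> = Mrep d \<rho> \<alpha>"
    and eqv': "\<forall>\<alpha>\<in>idx d 4. blockperm d E' lb' s' \<alpha> = Mrep d \<rho>' \<alpha>"
    and Bd: "\<forall>\<alpha>\<in>idx d 4. B \<alpha> = blockperm d E lb s \<alpha>"
    and B'd: "\<forall>\<alpha>\<in>idx d 4. B' \<alpha> = blockperm d E' lb' s' \<alpha>"
    and sup: "\<forall>C\<in>filled_subcubes d E s. supp d 4 B' \<inter> C \<subseteq> supp d 4 B"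
    and a: "\<alpha> \<in> idx d 4" and h1: "2 * (\<Sum>r<d. z (\<rho> r (\<alpha> r))) = 0"
    and h2: "(\<Sum>r<d. z (\<rho>' r (\<alpha> r))) = 0"
  shows "(\<Sum>r<d. z (\<rho> r (\<alpha> r))) = 0"
proof -
  have E: "\<forall>i<d. E i \<in> {1,2,3}" and s01: "s \<in> {0,1}" using bpp by (auto simp: bp_params_def)
  define c where "c i = pf (E i) (inv (\<rho> i) 0)" for i
  have sumpar: "2 * z (\<Sum>i<d. pf (E i) (\<beta> i)) = 2 * (\<Sum>r<d. z (\<rho> r (\<beta> r))) + 2 * z (\<Sum>i<d. c i)"
    if b: "\<beta> \<in> idx d 4" for \<beta>
  proof -
    have "2 * z (\<Sum>i<d. pf (E i) (\<beta> i)) = (\<Sum>i<d. 2 * z (pf (E i) (\<beta> i)))" by (simp add: sum_distrib_left)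
    also have "\<dots> = (\<Sum>i<d. 2 * z (\<rho> i (\<beta> i)) + 2 * z (c i))"
    proof (rule sum.cong)
      fix i assume "i \<in> {..<d}"
      then have i: "i < d" by simp
      have "\<beta> i < 4" using b i by (simp add: idx_def)
      then show "2 * z (pf (E i) (\<beta> i)) = 2 * z (\<rho> i (\<beta> i)) + 2 * z (c i)"
        unfolding c_def by (rule parity_pt[OF d3 E rp eqv i])
    qed simp
    also have "\<dots> = 2 * (\<Sum>r<d. z (\<rho> r (\<beta> r))) + 2 * z (\<Sum>i<d. c i)"
      by (simp add: sum.distrib sum_distrib_left)
    finally show ?thesis .
  qed
  define \<alpha>0 where "\<alpha>0 = mkv d \<rho> (\<lambda>_. 0)"
  have a0: "\<alpha>0 \<in> idx d 4" unfolding \<alpha>0_def by (rule mkv_idx[OF rp]) simp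
  have r0: "\<forall>r<d. \<rho> r (\<alpha>0 r) = 0" unfolding \<alpha>0_def using mkv_app[OF rp] by blast
  have "(\<Sum>r<d. z (\<rho> r (\<alpha>0 r))) = 0" using r0 by simp
  then have "Mrep d \<rho> \<alpha>0 = 1" by (simp add: Mrep_z)
  then have "bcond d E lb s \<alpha>0" using eqv a0 by (metis blockperm_bcond zero_neq_one)
  then have "(\<Sum>i<d. pf (E i) (\<alpha>0 i)) mod 2 = s mod 2" using s01 by (auto simp: bcond_def)
  then have "2 * z (\<Sum>i<d. pf (E i) (\<alpha>0 i)) = 2 * z s" by (simp add: z_par)
  moreover have "(\<Sum>r<d. z (\<rho> r (\<alpha>0 r))) = 0" using r0 by simp
  ultimately have cs: "2 * z (\<Sum>i<d. c i) = 2 * z s" using sumpar[OF a0] by simp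
  have "2 * z (\<Sum>i<d. pf (E i) (\<alpha> i)) = 2 * z s" using sumpar[OF a] h1 cs by simp
  then have wpar: "(\<Sum>i<d. pf (E i) (\<alpha> i)) mod 2 = s mod 2" by (simp add: z_par)
  define y where "y = pvec d E \<alpha>"
  have yQ: "y \<in> Qs d s"
  proof -
    have p2: "pf e x < 2" for e x using pf_le1[of e x] by simp
    have "y \<in> cube d" using p2 by (auto simp: y_def pvec_def cube_def)
    moreover have "weight d y = (\<Sum>i<d. pf (E i) (\<alpha> i))"
      unfolding weight_def y_def pvec_def by (rule sum.cong) auto
    ultimately show ?thesis using wpar by (simp add: Qs_def)
  qed
  have aC: "\<alpha> \<in> subcube d E y" using a by (simp add: subcube_def y_def pvec_def)
  have Cf: "subcube d E y \<in> filled_subcubes d E s" using yQ by (simp add: filled_subcubes_def)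
  have "B' \<alpha> = 1" using B'd eqv' a h2 by (simp add: Mrep_z)
  then have "\<alpha> \<in> supp d 4 B'" using a by (simp add: supp_def)
  then have "\<alpha> \<in> supp d 4 B" using sup Cf aC by blast
  then have "B \<alpha> \<noteq> 0" by (simp add: supp_def)
  then have "Mrep d \<rho> \<alpha> \<noteq> 0" using Bd eqv a by simp
  then show ?thesis by (simp add: Mrep_z split: if_splits)
qed

definition af :: "nat \<Rightarrow> (nat \<Rightarrow> nat \<Rightarrow> nat) \<Rightarrow> (nat \<Rightarrow> nat) \<Rightarrow> nat \<Rightarrow> nat" where
  "af m \<sigma> \<alpha> = (\<lambda>i. if i < m then \<sigma> i (\<alpha> i) else \<alpha> i)"

lemma chain:
  assumes sp: "\<forall>i<d. \<sigma> i permutes {..<4}"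
  shows "m \<le> d \<Longrightarrow> equivalent d 4 X (\<lambda>\<alpha>. X (af m \<sigma> \<alpha>))"
proof (induction m)
  case 0
  have "(\<lambda>\<alpha>. X (af 0 \<sigma> \<alpha>)) = X" by (simp add: af_def)
  then show ?case by (simp add: equivalent_def)
next
  case (Suc m)
  then have IH: "equivalent d 4 X (\<lambda>\<alpha>. X (af m \<sigma> \<alpha>))" and m: "m < d" by auto
  have eq: "af (Suc m) \<sigma> \<alpha> = af m \<sigma> (\<alpha>(m := \<sigma> m (\<alpha> m)))" for \<alpha>
    by (auto simp: af_def fun_eq_iff)
  have "equiv_step d 4 (\<lambda>\<alpha>. X (af m \<sigma> \<alpha>)) (\<lambda>\<alpha>. X (af (Suc m) \<sigma> \<alpha>))"
    unfolding equiv_step_def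
  proof (rule disjI2)
    show "\<exists>i<d. \<exists>\<pi>. \<pi> permutes {..<4} \<and> (\<forall>\<alpha>\<in>idx d 4. X (af (Suc m) \<sigma> \<alpha>) = X (af m \<sigma> (\<alpha>(i := \<pi> (\<alpha> i)))))"
      using m sp eq by (intro exI[of _ m] conjI exI[of _ "\<sigma> m"]) auto
  qed
  then show ?case using IH unfolding equivalent_def by (metis rtranclp.rtrancl_into_rtrancl)
qed

lemma pz_z: "n < 4 \<Longrightarrow> pz (z n) = z (pi01 n)"
  by (drule lt4, elim disjE) (simp_all add: pz_def pi01_def)

theorem mainTheorem13:
  fixes d :: nat and lam :: real and B B' A :: matrix
    and E E' :: "nat \<Rightarrow> nat" and lb lb' :: "(nat \<Rightarrow> nat) \<Rightarrow> nat" and s s' :: nat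
  assumes "d \<ge> 3"
    and "0 < lam" and "lam < 1"
    and "equivalent d 4 B (Mmat 4 d)" and "equivalent d 4 B' (Mmat 4 d)"
    and "bp_params d E lb s" and "\<forall>\<alpha>\<in>idx d 4. B \<alpha> = blockperm d E lb s \<alpha>"
    and "bp_params d E' lb' s'" and "\<forall>\<alpha>\<in>idx d 4. B' \<alpha> = blockperm d E' lb' s' \<alpha>"
    and "A = (\<lambda>\<alpha>. lam * B \<alpha> + (1 - lam) * B' \<alpha>)"
    and "tess_index d E s E' s' = ereal (real (d - 1))"
    and "\<forall>C\<in>filled_subcubes d E s. supp d 4 B' \<inter> C \<subseteq> supp d 4 B"
    and "\<forall>C'\<in>filled_subcubes d E' s'. supp d 4 B \<inter> C' \<subseteq> supp d 4 B'"
  shows "\<exists>L. in_L 4 d L \<and> equivalent d 4 A L"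
proof -
  have d3: "d \<ge> 3" by (rule assms(1))
  obtain \<rho> where rp: "\<forall>i<d. \<rho> i permutes {..<4}" and B\<rho>: "\<forall>\<alpha>\<in>idx d 4. B \<alpha> = Mrep d \<rho> \<alpha>"
    using equiv_rep[OF assms(4)] by blast
  obtain \<rho>' where rp': "\<forall>i<d. \<rho>' i permutes {..<4}" and B\<rho>': "\<forall>\<alpha>\<in>idx d 4. B' \<alpha> = Mrep d \<rho>' \<alpha>"
    using equiv_rep[OF assms(5)] by blast
  have E: "\<forall>i<d. E i \<in> {1,2,3}" using assms(6) by (simp add: bp_params_def)
  have E': "\<forall>i<d. E' i \<in> {1,2,3}" using assms(8) by (simp add: bp_params_def)
  have eqv: "\<forall>\<alpha>\<in>idx d 4. blockperm d E lb s \<alpha> = Mrep d \<rho> \<alpha>" using assms(7) B\<rho> by simp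
  have eqv': "\<forall>\<alpha>\<in>idx d 4. blockperm d E' lb' s' \<alpha> = Mrep d \<rho>' \<alpha>" using assms(9) B\<rho>' by simp
  obtain k where k: "k < d" "E k \<noteq> E' k" "\<forall>i<d. i \<noteq> k \<longrightarrow> E i = E' i"
    using tess_k[OF E E' d3 assms(11)] by blast
  define \<Psi> where "\<Psi> r w = z (\<rho>' r (inv (\<rho> r) (toN w)))" for r w
  have invlt: "inv (\<rho> r) a < 4" if "r < d" "a < 4" for r a
    using perm4_lt[OF permutes_inv[OF rp[rule_format, OF that(1)]] that(2)] .
  have inj: "\<forall>r<d. inj (\<Psi> r)"
  proof (intro allI impI injI)
    fix r a b assume r: "r < d" and h: "\<Psi> r a = \<Psi> r b"
    have l: "inv (\<rho> r) (toN a) < 4" "inv (\<rho> r) (toN b) < 4" using invlt r toN(1) by auto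
    have l': "\<rho>' r (inv (\<rho> r) (toN a)) < 4" "\<rho>' r (inv (\<rho> r) (toN b)) < 4"
      using perm4_lt[OF rp'[rule_format, OF r]] l by auto
    have "\<rho>' r (inv (\<rho> r) (toN a)) = \<rho>' r (inv (\<rho> r) (toN b))"
      using z_lt_inj[OF l'] h unfolding \<Psi>_def by blast
    then have "inv (\<rho> r) (toN a) = inv (\<rho> r) (toN b)" using permutes_inj[OF rp'[rule_format, OF r]] by (metis injD)
    then have "toN a = toN b" using permutes_inj[OF permutes_inv[OF rp[rule_format, OF r]]] by (metis injD)
    then show "a = b" by (metis toN(2))
  qed
  have par: "(2 * \<Psi> r a = 2 * \<Psi> r b) = (pf (E' r) (inv (\<rho> r) (toN a)) = pf (E' r) (inv (\<rho> r) (toN b)))"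
    if r: "r < d" for r a b
    using bp_pair[OF d3 E' rp' eqv' r invlt[OF r toN(1)] invlt[OF r toN(1)]] unfolding \<Psi>_def by simp
  have par0: "(2 * a = 2 * b) = (pf (E r) (inv (\<rho> r) (toN a)) = pf (E r) (inv (\<rho> r) (toN b)))"
    if r: "r < d" for r a b
    using bp_pair[OF d3 E rp eqv r invlt[OF r toN(1)] invlt[OF r toN(1)]]
    by (simp add: perm4_inv[OF rp[rule_format, OF r]] toN(2))
  have P1: "\<forall>r<d. r \<noteq> k \<longrightarrow> (\<forall>a b. (2 * \<Psi> r a = 2 * \<Psi> r b) = (2 * a = 2 * b))"
  proof (intro allI impI)
    fix r a b assume r: "r < d" and rk: "r \<noteq> k"
    then have "E r = E' r" using k(3) by blast
    then show "(2 * \<Psi> r a = 2 * \<Psi> r b) = (2 * a = 2 * b)" using par[OF r, of a b] par0[OF r, of a b] by simp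
  qed
  have P2: "\<not> (\<forall>a b. (2 * \<Psi> k a = 2 * \<Psi> k b) = (2 * a = 2 * b))"
  proof
    assume h: "\<forall>a b. (2 * \<Psi> k a = 2 * \<Psi> k b) = (2 * a = 2 * b)"
    have ek: "E k \<in> {1,2,3}" "E' k \<in> {1,2,3}" using E E' k(1) by auto
    obtain a0 b0 where ab: "a0 < 4" "b0 < 4" "(pf (E k) a0 = pf (E k) b0) \<noteq> (pf (E' k) a0 = pf (E' k) b0)"
      using pf_mismatch[OF ek k(2)] by blast
    have ta: "inv (\<rho> k) (toN (z (\<rho> k a0))) = a0"
      using toN_z[OF perm4_lt[OF rp[rule_format, OF k(1)] ab(1)]] perm4_inv(2)[OF rp[rule_format, OF k(1)]] by simp
    have tb: "inv (\<rho> k) (toN (z (\<rho> k b0))) = b0"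
      using toN_z[OF perm4_lt[OF rp[rule_format, OF k(1)] ab(2)]] perm4_inv(2)[OF rp[rule_format, OF k(1)]] by simp
    from h have "(2 * \<Psi> k (z (\<rho> k a0)) = 2 * \<Psi> k (z (\<rho> k b0))) = (2 * z (\<rho> k a0) = 2 * z (\<rho> k b0))" by blast
    then show False using par[OF k(1), of "z (\<rho> k a0)" "z (\<rho> k b0)"] par0[OF k(1), of "z (\<rho> k a0)" "z (\<rho> k b0)"] ta tb ab(3) by simp
  qed
  have C1: "\<forall>x. 2 * (\<Sum>r<d. x r) = 0 \<longrightarrow> (\<Sum>r<d. \<Psi> r (x r)) = 0 \<longrightarrow> (\<Sum>r<d. x r) = 0"
  proof (intro allI impI)
    fix x :: "nat \<Rightarrow> 4" assume h1: "2 * (\<Sum>r<d. x r) = 0" and h2: "(\<Sum>r<d. \<Psi> r (x r)) = 0"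
    define \<alpha> where "\<alpha> = mkv d \<rho> (\<lambda>r. toN (x r))"
    have ai: "\<alpha> \<in> idx d 4" unfolding \<alpha>_def by (rule mkv_idx[OF rp]) (simp add: toN(1))
    have e1: "(\<Sum>r<d. z (\<rho> r (\<alpha> r))) = (\<Sum>r<d. x r)"
      using mkv_app[OF rp] by (intro sum.cong) (auto simp: \<alpha>_def toN(2))
    have e2: "(\<Sum>r<d. z (\<rho>' r (\<alpha> r))) = (\<Sum>r<d. \<Psi> r (x r))"
      by (intro sum.cong) (auto simp: \<alpha>_def mkv_def \<Psi>_def)
    show "(\<Sum>r<d. x r) = 0"
      using C1_nat[OF d3 assms(6) rp eqv eqv' assms(7) assms(9) assms(12) ai] h1 h2 e1 e2 by simp
  qed
  obtain h where h1: "\<forall>r<d. inj (h r)" and h2: "\<forall>x. (\<Sum>r<d. h r (x r)) = (\<Sum>r<d. x r) \<and>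
          ((\<Sum>r<d. \<Psi> r (h r (x r))) = 0 \<longleftrightarrow> (\<Sum>r\<in>{..<d}-{k}. x r) + pz (x k) = 0)"
    using core_z[OF d3 k(1) inj P1 P2 C1] by blast
  define H where "H r a = (if a < 4 then toN (h r (z a)) else a)" for r a
  have Hp: "H r permutes {..<4}" if r: "r < d" for r
  proof (rule inj_imp_permutes)
    show "inj_on (H r) {..<4}"
    proof (rule inj_onI)
      fix a b assume ab: "a \<in> {..<4}" "b \<in> {..<4}" and e: "H r a = H r b"
      then have "toN (h r (z a)) = toN (h r (z b))" by (simp add: H_def)
      then have "h r (z a) = h r (z b)" by (metis toN(2))
      then have "z a = z b" using h1 r by (auto dest: injD)
      then show "a = b" using z_lt_inj ab by auto
    qed
    show "finite {..<4::nat}" by simp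
    show "H r x \<in> {..<4}" if "x \<in> {..<4}" for x using that by (simp add: H_def toN(1))
    show "H r x = x" if "x \<notin> {..<4}" for x using that by (simp add: H_def)
  qed
  define \<sigma> where "\<sigma> r = inv (\<rho> r) \<circ> H r" for r
  have \<sigma>p: "\<forall>r<d. \<sigma> r permutes {..<4}"
    using Hp rp by (auto simp: \<sigma>_def intro: permutes_compose permutes_inv)
  define A1 where "A1 = (\<lambda>\<alpha>. A (af d \<sigma> \<alpha>))"
  have ch: "equivalent d 4 A A1" unfolding A1_def by (rule chain[OF \<sigma>p]) simp
  define \<tau> where "\<tau> = transpose k (d - 1)"
  have \<tau>p: "\<tau> permutes {..<d}" using k(1) d3 unfolding \<tau>_def by (intro permutes_swap_id) auto
  have \<tau>k: "\<tau> k = d - 1" by (simp add: \<tau>_def)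
  have step: "\<forall>\<alpha>\<in>idx d 4. Lmat 4 d lam \<alpha> = A1 (\<alpha> \<circ> \<tau>)"
  proof
    fix \<alpha> assume a: "\<alpha> \<in> idx d 4"
    define \<beta> where "\<beta> = \<alpha> \<circ> \<tau>"
    have bl: "\<beta> r < 4" if "r < d" for r
    proof -
      have "\<tau> r < d" using permutes_in_image[OF \<tau>p] that by simp
      then show ?thesis using a by (simp add: \<beta>_def idx_def)
    qed
    define \<gamma> where "\<gamma> = af d \<sigma> \<beta>"
    have gi: "\<gamma> \<in> idx d 4"
    proof (rule idxI)
      show "\<forall>i<d. \<gamma> i < 4" using bl \<sigma>p perm4_lt by (simp add: \<gamma>_def af_def)
      show "\<forall>i\<ge>d. \<gamma> i = 0"
      proof (intro allI impI)
        fix i assume "d \<le> i"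
        then have "\<tau> i = i" using permutes_not_in[OF \<tau>p] by simp
        then show "\<gamma> i = 0" using a \<open>d \<le> i\<close> by (simp add: \<gamma>_def af_def \<beta>_def idx_def)
      qed
    qed
    have g1: "z (\<rho> r (\<gamma> r)) = h r (z (\<beta> r))" if r: "r < d" for r
      using r bl[OF r] by (simp add: \<gamma>_def af_def \<sigma>_def H_def perm4_inv[OF rp[rule_format, OF r]] toN(2))
    have g2: "z (\<rho>' r (\<gamma> r)) = \<Psi> r (h r (z (\<beta> r)))" if r: "r < d" for r
      using r bl[OF r] by (simp add: \<gamma>_def af_def \<sigma>_def H_def \<Psi>_def)
    have hx1: "(\<Sum>r<d. h r (z (\<beta> r))) = (\<Sum>r<d. z (\<beta> r))" using spec[OF h2, of "\<lambda>r. z (\<beta> r)"] by simp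
    have hx2: "(\<Sum>r<d. \<Psi> r (h r (z (\<beta> r)))) = 0 \<longleftrightarrow> (\<Sum>r\<in>{..<d}-{k}. z (\<beta> r)) + pz (z (\<beta> k)) = 0"
      using spec[OF h2, of "\<lambda>r. z (\<beta> r)"] by simp
    have sperm: "(\<Sum>r<d. z (\<beta> r)) = (\<Sum>r<d. z (\<alpha> r))"
      unfolding \<beta>_def using sum.permute[OF \<tau>p, of "\<lambda>r. z (\<alpha> r)"] by (simp add: comp_def)
    have B1: "B \<gamma> = Mmat 4 d \<alpha>"
    proof -
      have "(\<Sum>r<d. z (\<rho> r (\<gamma> r))) = (\<Sum>r<d. h r (z (\<beta> r)))" using g1 by (intro sum.cong) auto
      also have "\<dots> = z (\<Sum>r<d. \<alpha> r)" using hx1 sperm by simp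
      finally have e: "(\<Sum>r<d. z (\<rho> r (\<gamma> r))) = z (\<Sum>r<d. \<alpha> r)" .
      have "B \<gamma> = Mrep d \<rho> \<gamma>" using B\<rho> gi by simp
      also have "\<dots> = (if z (\<Sum>r<d. \<alpha> r) = 0 then 1 else 0)" by (simp only: Mrep_z e)
      also have "\<dots> = Mmat 4 d \<alpha>" by (simp only: Mmat_def z_eq0_iff)
      finally show ?thesis .
    qed
    have \<beta>k: "\<beta> k = \<alpha> (d - 1)" by (simp add: \<beta>_def \<tau>k)
    have sR: "(\<Sum>r\<in>{..<d}-{k}. z (\<beta> r)) = (\<Sum>r<d - 1. z (\<alpha> r))"
    proof -
      have s1: "(\<Sum>r<d. z (\<beta> r)) = z (\<beta> k) + (\<Sum>r\<in>{..<d}-{k}. z (\<beta> r))" using k(1) by (simp add: sum.remove)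
      have s2: "(\<Sum>r<d. z (\<alpha> r)) = z (\<alpha> (d - 1)) + (\<Sum>r\<in>{..<d}-{d - 1}. z (\<alpha> r))"
        using sum.remove[of "{..<d}" "d - 1" "\<lambda>r. z (\<alpha> r)"] d3 by simp
      have s3: "{..<d}-{d - 1} = {..<d - 1}" using d3 by auto
      show ?thesis using s1 s2 s3 sperm \<beta>k by simp
    qed
    have B2: "B' \<gamma> = Mpi 4 d \<alpha>"
    proof -
      have "(\<Sum>r<d. z (\<rho>' r (\<gamma> r))) = (\<Sum>r<d. \<Psi> r (h r (z (\<beta> r))))" using g2 by (intro sum.cong) auto
      then have "(\<Sum>r<d. z (\<rho>' r (\<gamma> r))) = 0 \<longleftrightarrow> (\<Sum>r<d - 1. z (\<alpha> r)) + pz (z (\<alpha> (d - 1))) = 0"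
        using hx2 sR \<beta>k by simp
      also have "pz (z (\<alpha> (d - 1))) = z (pi01 (\<alpha> (d - 1)))"
        using a d3 by (intro pz_z) (simp add: idx_def)
      also have "(\<Sum>r<d - 1. z (\<alpha> r)) + z (pi01 (\<alpha> (d - 1))) = z ((\<Sum>r<d - 1. \<alpha> r) + pi01 (\<alpha> (d - 1)))"
        by simp
      finally have e: "(\<Sum>r<d. z (\<rho>' r (\<gamma> r))) = 0 \<longleftrightarrow> ((\<Sum>r<d - 1. \<alpha> r) + pi01 (\<alpha> (d - 1))) mod 4 = 0"
        unfolding z_eq0_iff .
      have "B' \<gamma> = Mrep d \<rho>' \<gamma>" using B\<rho>' gi by simp
      also have "\<dots> = (if (\<Sum>r<d. z (\<rho>' r (\<gamma> r))) = 0 then 1 else 0)" by (simp only: Mrep_z)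
      also have "\<dots> = Mpi 4 d \<alpha>" unfolding Mpi_def using e by simp
      finally show ?thesis .
    qed
    have "A1 (\<alpha> \<circ> \<tau>) = A \<gamma>" by (simp add: A1_def \<gamma>_def \<beta>_def)
    also have "\<dots> = lam * B \<gamma> + (1 - lam) * B' \<gamma>" using assms(10) by simp
    also have "\<dots> = Lmat 4 d lam \<alpha>" using B1 B2 by (simp add: Lmat_def)
    finally show "Lmat 4 d lam \<alpha> = A1 (\<alpha> \<circ> \<tau>)" by simp
  qed
  have "equiv_step d 4 A1 (Lmat 4 d lam)" unfolding equiv_step_def using \<tau>p step by blast
  then have "equivalent d 4 A (Lmat 4 d lam)" using ch unfolding equivalent_def
    by (metis rtranclp.rtrancl_into_rtrancl)
  moreover have "in_L 4 d (Lmat 4 d lam)" using assms(2,3) by (auto simp: in_L_def)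
  ultimately show ?thesis by blast
qed

end
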